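(* If $\Gamma$ is a locally-finite undirected simple geodetic graph in which every isometrically embedded circuit has length at most five, then every embedded circuit in $\Gamma$ has diameter at most two.
   Context: A graph is geodetic if between any pair of vertices there is a unique shortest path (geodesic); in particular it is connected, with path metric $d$. A path $u_0,u_1,\dots,u_n$ is an embedded circuit (of length $n$) if $u_0,\dots,u_{n-1}$ are distinct and $u_0=u_n$ (for adjacent $u,v$, the path $u,v,u$ is an embedded circuit of length two). An embedded circuit is isometrically embedded if $d(u_i,u_j)=\min\{j-i,n+i-j\}$ for all $0\le i<j<n$. The diameter of an embedded circuit is the maximum of $d(u_i,u_j)$ over its vertices, with $d$ the distance in $\Gamma$. *)

theory Defs
  imports Main
begin

definition simple_graph :: "'a set \<Rightarrow> ('a \<Rightarrow> 'a \<Rightarrow> bool) \<Rightarrow> bool" where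
  "simple_graph V E \<longleftrightarrow>
     (\<forall>u v. E u v \<longrightarrow> u \<in> V \<and> v \<in> V) \<and>
     (\<forall>u v. E u v \<longrightarrow> E v u) \<and>
     (\<forall>u. \<not> E u u)"

definition locally_finite :: "'a set \<Rightarrow> ('a \<Rightarrow> 'a \<Rightarrow> bool) \<Rightarrow> bool" where
  "locally_finite V E \<longleftrightarrow> (\<forall>v\<in>V. finite {w. E v w})"

text \<open>A walk given as a nonempty vertex list with consecutive vertices adjacent;
  its length is the number of edges, i.e. length minus one.\<close>
definition walk :: "('a \<Rightarrow> 'a \<Rightarrow> bool) \<Rightarrow> 'a list \<Rightarrow> bool" where
  "walk E p \<longleftrightarrow> p \<noteq> [] \<and> (\<forall>i. Suc i < length p \<longrightarrow> E (p ! i) (p ! Suc i))"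

definition gdist :: "('a \<Rightarrow> 'a \<Rightarrow> bool) \<Rightarrow> 'a \<Rightarrow> 'a \<Rightarrow> nat" where
  "gdist E u v = (LEAST n. \<exists>p. walk E p \<and> hd p = u \<and> last p = v \<and> length p = Suc n)"

text \<open>Geodetic: between any two vertices there is a unique shortest path
  (in particular the graph is connected).\<close>
definition geodetic :: "'a set \<Rightarrow> ('a \<Rightarrow> 'a \<Rightarrow> bool) \<Rightarrow> bool" where
  "geodetic V E \<longleftrightarrow>
     (\<forall>u\<in>V. \<forall>v\<in>V. \<exists>!p. walk E p \<and> hd p = u \<and> last p = v \<and> length p = Suc (gdist E u v))"

definition embedded_circuit :: "('a \<Rightarrow> 'a \<Rightarrow> bool) \<Rightarrow> (nat \<Rightarrow> 'a) \<Rightarrow> nat \<Rightarrow> bool" where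
  "embedded_circuit E u n \<longleftrightarrow>
     (\<forall>i<n. E (u i) (u (Suc i))) \<and> inj_on u {..<n} \<and> u n = u 0"

definition isometric_circuit :: "('a \<Rightarrow> 'a \<Rightarrow> bool) \<Rightarrow> (nat \<Rightarrow> 'a) \<Rightarrow> nat \<Rightarrow> bool" where
  "isometric_circuit E u n \<longleftrightarrow> embedded_circuit E u n \<and>
     (\<forall>i j. i < j \<and> j < n \<longrightarrow> gdist E (u i) (u j) = min (j - i) (n + i - j))"

definition circuit_diameter :: "('a \<Rightarrow> 'a \<Rightarrow> bool) \<Rightarrow> (nat \<Rightarrow> 'a) \<Rightarrow> nat \<Rightarrow> nat" where
  "circuit_diameter E u n = Max {gdist E (u i) (u j) | i j. i \<le> n \<and> j \<le> n}"

end

theory Submission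
  imports Defs
begin


lemma walk_Nil[simp]: "\<not> walk E []" by (simp add: walk_def)
lemma walk_single[simp]: "walk E [a]" by (simp add: walk_def)
lemma walk_Cons2[simp]: "walk E (a # b # p) \<longleftrightarrow> E a b \<and> walk E (b # p)"
proof
  assume "walk E (a # b # p)"
  then show "E a b \<and> walk E (b # p)"
    unfolding walk_def by (metis Suc_less_eq length_Cons list.distinct(1) nth_Cons_0 nth_Cons_Suc zero_less_Suc)
next
  assume h: "E a b \<and> walk E (b # p)"
  show "walk E (a # b # p)" unfolding walk_def
  proof (intro conjI allI impI)
    fix i assume "Suc i < length (a # b # p)"
    then show "E ((a # b # p) ! i) ((a # b # p) ! Suc i)"
      using h unfolding walk_def by (cases i) auto
  qed simp
qed

lemma walk_ConsD: "walk E (a # p) \<Longrightarrow> p \<noteq> [] \<Longrightarrow> walk E p"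
  by (cases p) auto

lemma walk_append:
  "xs \<noteq> [] \<Longrightarrow> ys \<noteq> [] \<Longrightarrow> walk E (xs @ ys) \<longleftrightarrow> walk E xs \<and> walk E ys \<and> E (last xs) (hd ys)"
proof (induction xs)
  case Nil then show ?case by simp
next
  case (Cons a xs)
  show ?case
  proof (cases xs)
    case Nil
    then show ?thesis using Cons by (cases ys) auto
  next
    case (Cons b zs)
    then show ?thesis using Cons.IH Cons.prems by auto
  qed
qed

lemma walk_concat: "walk E p \<Longrightarrow> walk E q \<Longrightarrow> last p = hd q \<Longrightarrow> walk E (p @ tl q)"
proof (cases "tl q = []")
  case True then show "walk E p \<Longrightarrow> walk E q \<Longrightarrow> last p = hd q \<Longrightarrow> walk E (p @ tl q)" by simp
next
  case False
  assume a: "walk E p" "walk E q" "last p = hd q"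
  obtain x r where q: "q = x # r" using a(2) by (cases q) auto
  have "r \<noteq> []" using False q by simp
  then obtain y s where r: "r = y # s" by (cases r) auto
  have p: "p \<noteq> []" using a(1) by auto
  show ?thesis using a q r p by (simp add: walk_append)
qed

lemma walk_rev: "(\<And>a b. E a b \<Longrightarrow> E b a) \<Longrightarrow> walk E p \<Longrightarrow> walk E (rev p)"
proof (induction p)
  case Nil then show ?case by simp
next
  case (Cons a p)
  show ?case
  proof (cases p)
    case Nil then show ?thesis by simp
  next
    case (Cons b q)
    then have "walk E (rev p)" using Cons.IH Cons.prems by auto
    moreover have "E b a" using Cons.prems Cons by auto
    ultimately have "walk E ((rev q @ [b]) @ [a])" using Cons by (subst walk_append) auto
    then show ?thesis using Cons by simp
  qed
qed

lemma walk_drop: "walk E p \<Longrightarrow> k < length p \<Longrightarrow> walk E (drop k p)"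
  unfolding walk_def by auto

lemma walk_take: "walk E p \<Longrightarrow> 0 < k \<Longrightarrow> walk E (take k p)"
  unfolding walk_def by auto

lemma walk_nth: "walk E p \<Longrightarrow> Suc i < length p \<Longrightarrow> E (p ! i) (p ! Suc i)"
  unfolding walk_def by auto

lemma gdist_le: "walk E p \<Longrightarrow> hd p = a \<Longrightarrow> last p = b \<Longrightarrow> gdist E a b \<le> length p - 1"
  unfolding gdist_def
  by (rule Least_le) (metis Suc_pred' length_greater_0_conv walk_def)

lemma gdist_refl[simp]: "gdist E a a = 0"
  using gdist_le[of E "[a]" a a] by simp

locale geo =
  fixes V :: "'a set" and E :: "'a \<Rightarrow> 'a \<Rightarrow> bool"
  assumes sg: "simple_graph V E" and gd: "geodetic V E"
begin

abbreviation dd where "dd \<equiv> gdist E"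

definition geod where
  "geod p a b \<longleftrightarrow> walk E p \<and> hd p = a \<and> last p = b \<and> length p = Suc (dd a b)"

lemma E_V: "E a b \<Longrightarrow> a \<in> V \<and> b \<in> V" using sg unfolding simple_graph_def by blast
lemma E_sym: "E a b \<Longrightarrow> E b a" using sg unfolding simple_graph_def by blast
lemma E_irr: "\<not> E a a" using sg unfolding simple_graph_def by blast
lemma E_neq: "E a b \<Longrightarrow> a \<noteq> b" using E_irr by blast

lemma geod_ex: "a \<in> V \<Longrightarrow> b \<in> V \<Longrightarrow> \<exists>p. geod p a b"
  using gd unfolding geodetic_def geod_def by blast

lemma geod_uniq: "a \<in> V \<Longrightarrow> b \<in> V \<Longrightarrow> geod p a b \<Longrightarrow> geod q a b \<Longrightarrow> p = q"
  using gd unfolding geodetic_def geod_def by blast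

lemma walk_V: "walk E p \<Longrightarrow> hd p \<in> V \<Longrightarrow> x \<in> set p \<Longrightarrow> x \<in> V"
proof (induction p)
  case Nil then show ?case by simp
next
  case (Cons a p)
  show ?case
  proof (cases p)
    case Nil then show ?thesis using Cons by simp
  next
    case (Cons b q)
    then have "E a b" "walk E p" using Cons.prems by auto
    then have "hd p \<in> V" using E_V Cons by auto
    then show ?thesis using Cons.IH Cons.prems \<open>walk E p\<close> by auto
  qed
qed

lemma walk_of_geod: "geod p a b \<Longrightarrow> walk E p \<and> hd p = a \<and> last p = b \<and> length p = Suc (dd a b)"
  unfolding geod_def by auto

lemma geod_le: "walk E p \<Longrightarrow> hd p = a \<Longrightarrow> last p = b \<Longrightarrow> dd a b \<le> length p - 1"
  by (rule gdist_le)

lemma walk_is_geod: "walk E p \<Longrightarrow> hd p = a \<Longrightarrow> last p = b \<Longrightarrow> length p = Suc (dd a b) \<Longrightarrow> geod p a b"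
  unfolding geod_def by auto

lemma d_zero: "a \<in> V \<Longrightarrow> b \<in> V \<Longrightarrow> dd a b = 0 \<Longrightarrow> a = b"
proof -
  assume V: "a \<in> V" "b \<in> V" and "dd a b = 0"
  obtain p where "geod p a b" using geod_ex[OF V] by blast
  then have "walk E p" "hd p = a" "last p = b" "length p = 1" using \<open>dd a b = 0\<close> unfolding geod_def by auto
  then show "a = b" by (cases p) auto
qed

lemma d_sym: "a \<in> V \<Longrightarrow> b \<in> V \<Longrightarrow> dd a b = dd b a"
proof -
  have *: "dd b a \<le> dd a b" if ab: "a \<in> V" "b \<in> V" for a b
  proof -
    obtain p where p: "geod p a b" using geod_ex[OF ab] by blast
    have "walk E (rev p)" using p walk_rev[of E p] E_sym unfolding geod_def by blast
    moreover have "p \<noteq> []" using p unfolding geod_def by auto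
    ultimately have "dd b a \<le> length (rev p) - 1"
      using p geod_le[of "rev p" b a] unfolding geod_def by (simp add: hd_rev last_rev)
    then show ?thesis using p unfolding geod_def by simp
  qed
  assume "a \<in> V" "b \<in> V" then show ?thesis using *[of a b] *[of b a] by simp
qed

lemma d_tri: "a \<in> V \<Longrightarrow> b \<in> V \<Longrightarrow> c \<in> V \<Longrightarrow> dd a c \<le> dd a b + dd b c"
proof -
  assume V: "a \<in> V" "b \<in> V" "c \<in> V"
  obtain p where p: "geod p a b" using geod_ex V by blast
  obtain q where q: "geod q b c" using geod_ex V by blast
  have w: "walk E (p @ tl q)" using p q walk_concat unfolding geod_def by metis
  have ne: "p \<noteq> []" "q \<noteq> []" using p q unfolding geod_def by auto
  have "hd (p @ tl q) = a" using p ne unfolding geod_def by simp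
  moreover have "last (p @ tl q) = c"
    using p q ne unfolding geod_def by (cases q) auto
  ultimately have "dd a c \<le> length (p @ tl q) - 1" using w geod_le by blast
  then show ?thesis using p q unfolding geod_def by simp
qed

lemma d_adj_le: "E a b \<Longrightarrow> dd a b \<le> 1"
  using gdist_le[of E "[a,b]" a b] by simp

lemma d_adj: "E a b \<Longrightarrow> dd a b = 1"
proof -
  assume e: "E a b"
  have "dd a b \<noteq> 0" using d_zero E_V e E_neq by blast
  then show ?thesis using d_adj_le[OF e] by linarith
qed

lemma d_one: "a \<in> V \<Longrightarrow> b \<in> V \<Longrightarrow> dd a b = 1 \<Longrightarrow> E a b"
proof -
  assume V: "a \<in> V" "b \<in> V" and h: "dd a b = 1"
  obtain p where p: "geod p a b" using geod_ex V by blast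
  then have "length p = 2" "walk E p" "hd p = a" "last p = b" using h unfolding geod_def by auto
  then show ?thesis
    by (cases p; cases "tl p") (auto simp: walk_def)
qed

lemma lev_adj: "r \<in> V \<Longrightarrow> E x y \<Longrightarrow> dd r y \<le> dd r x + 1"
  using d_tri[of r x y] d_adj[of x y] E_V by fastforce

lemma geod_sub:
  assumes p: "geod p a b" and V: "a \<in> V" and ij: "i \<le> j" "j < length p"
  shows "dd (p ! i) (p ! j) = j - i"
proof -
  have w: "walk E p" and hp: "hd p = a" and lp: "last p = b" and len: "length p = Suc (dd a b)"
    using p unfolding geod_def by auto
  have ne: "p \<noteq> []" using w by auto
  have PV: "x \<in> set p \<Longrightarrow> x \<in> V" for x using walk_V[OF w] hp V by auto
  have bV: "b \<in> V" using PV lp ne by auto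
  define s where "s = drop i (take (Suc j) p)"
  have s_len: "length s = j - i + 1" using ij unfolding s_def by simp
  have s_walk: "walk E s" unfolding s_def
    using ij walk_drop[OF walk_take[OF w, of "Suc j"], of i] by simp
  have s_hd: "hd s = p ! i" unfolding s_def using ij by (simp add: hd_drop_conv_nth)
  have s_last: "last s = p ! j"
  proof -
    have "s \<noteq> []" using s_len by auto
    then have "last s = s ! (length s - 1)" by (simp add: last_conv_nth)
    also have "\<dots> = p ! j" unfolding s_def using ij s_len[unfolded s_def] by simp
    finally show ?thesis .
  qed
  have le1: "dd (p ! i) (p ! j) \<le> j - i" using geod_le[OF s_walk s_hd s_last] s_len by simp
  have Vi: "p ! i \<in> V" "p ! j \<in> V" using PV ij by auto
  have "dd a (p ! i) \<le> i"
  proof -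
    have "walk E (take (Suc i) p)" using w walk_take by blast
    moreover have "hd (take (Suc i) p) = a" using hp ne by (simp add: hd_take)
    moreover have "last (take (Suc i) p) = p ! i"
    proof -
      have "take (Suc i) p \<noteq> []" using ne by simp
      then have "last (take (Suc i) p) = take (Suc i) p ! (length (take (Suc i) p) - 1)" by (simp add: last_conv_nth)
      also have "\<dots> = p ! i" using ij by (simp add: min_absorb1)
      finally show ?thesis .
    qed
    ultimately show ?thesis using geod_le[of "take (Suc i) p"] ij by fastforce
  qed
  moreover have "dd (p ! j) b \<le> length p - 1 - j"
  proof -
    have "walk E (drop j p)" using w walk_drop ij by blast
    moreover have "hd (drop j p) = p ! j" using ij by (simp add: hd_drop_conv_nth)
    moreover have "last (drop j p) = b" using ij lp by simp
    ultimately show ?thesis using geod_le[of "drop j p"] ij by fastforce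
  qed
  moreover have "dd a b \<le> dd a (p ! i) + dd (p ! i) (p ! j) + dd (p ! j) b"
    using d_tri[OF V Vi(1) bV] d_tri[OF Vi bV] by linarith
  ultimately show ?thesis using le1 len ij by linarith
qed

end



context geo begin

lemma geod_ne: "geod p a b \<Longrightarrow> p \<noteq> []" unfolding geod_def by auto

lemma geod_distinct: assumes "geod p a b" "a \<in> V" shows "distinct p"
proof (rule distinct_conv_nth[THEN iffD2], intro allI impI)
  fix i j assume ij: "i < length p" "j < length p" "i \<noteq> j"
  show "p ! i \<noteq> p ! j"
  proof
    assume eq: "p ! i = p ! j"
    show False
    proof (cases "i < j")
      case True
      then have "dd (p ! i) (p ! j) = j - i" using geod_sub[OF assms, of i j] ij by simp
      then show False using eq True by simp
    next
      case False
      then have "dd (p ! j) (p ! i) = i - j" using geod_sub[OF assms, of j i] ij by simp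
      then show False using eq False ij by simp
    qed
  qed
qed

lemma geod_snoc:
  assumes g: "geod p r w" and e: "E w v" and l: "dd r w + 1 = dd r v"
  shows "geod (p @ [v]) r v"
proof -
  have ne: "p \<noteq> []" using g geod_ne by auto
  have "walk E (p @ [v])" using g e ne unfolding geod_def by (simp add: walk_append)
  then show ?thesis using g ne l unfolding geod_def by simp
qed

lemma parent_unique:
  assumes r: "r \<in> V" and e: "E w v" "E w' v" and l: "dd r w + 1 = dd r v" "dd r w' + 1 = dd r v"
  shows "w = w'"
proof -
  have V: "w \<in> V" "w' \<in> V" "v \<in> V" using e E_V by auto
  obtain p where p: "geod p r w" using geod_ex r V by blast
  obtain q where q: "geod q r w'" using geod_ex r V by blast
  have "p @ [v] = q @ [v]" using geod_uniq[OF r V(3) geod_snoc[OF p e(1) l(1)] geod_snoc[OF q e(2) l(2)]] .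
  then have "p = q" by simp
  then show ?thesis using p q unfolding geod_def by auto
qed

lemma anc:
  assumes V: "r \<in> V" "u \<in> V" "v \<in> V" and s: "dd r u + dd u v = dd r v" and p: "geod p r v"
  shows "p ! dd r u = u"
proof -
  obtain g1 where g1: "geod g1 r u" using geod_ex V by blast
  obtain g2 where g2: "geod g2 u v" using geod_ex V by blast
  have ne: "g1 \<noteq> []" "g2 \<noteq> []" using g1 g2 geod_ne by auto
  have w: "walk E (g1 @ tl g2)" using g1 g2 walk_concat unfolding geod_def by metis
  have h: "hd (g1 @ tl g2) = r" using g1 ne unfolding geod_def by simp
  have la: "last (g1 @ tl g2) = v"
  proof (cases "tl g2 = []")
    case True
    then have "g2 = [hd g2]" using ne by (cases g2) auto
    then have "u = v" using g2 unfolding geod_def by (metis last_ConsL)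
    then show ?thesis using True g1 unfolding geod_def by simp
  next
    case False
    then show ?thesis using g2 ne unfolding geod_def by (cases g2) auto
  qed
  have len: "length (g1 @ tl g2) = Suc (dd r v)" using g1 g2 s unfolding geod_def by simp
  have "g1 @ tl g2 = p" using geod_uniq[OF V(1) V(3) walk_is_geod[OF w h la len] p] .
  moreover have "(g1 @ tl g2) ! dd r u = u"
  proof -
    have "dd r u < length g1" using g1 unfolding geod_def by simp
    then have "(g1 @ tl g2) ! dd r u = g1 ! dd r u" by (simp add: nth_append)
    also have "\<dots> = last g1" using g1 ne unfolding geod_def by (simp add: last_conv_nth)
    finally show ?thesis using g1 unfolding geod_def by simp
  qed
  ultimately show ?thesis by simp
qed

lemma parent_ex:
  assumes V: "r \<in> V" "v \<in> V" and ne: "v \<noteq> r"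
  shows "\<exists>w. E w v \<and> dd r w + 1 = dd r v"
proof -
  obtain p where p: "geod p r v" using geod_ex V by blast
  have len: "length p = Suc (dd r v)" using p unfolding geod_def by simp
  have "dd r v \<noteq> 0" using d_zero[OF V] ne by auto
  then obtain k where k: "dd r v = Suc k" by (cases "dd r v") auto
  have e: "E (p ! k) (p ! Suc k)" using walk_nth[of E p k] p len k unfolding geod_def by simp
  have pne: "p \<noteq> []" using p geod_ne by blast
  have "p ! Suc k = v"
  proof -
    have "last p = p ! (length p - 1)" using pne by (simp add: last_conv_nth)
    then show ?thesis using p len k unfolding geod_def by simp
  qed
  moreover have "dd (p ! 0) (p ! k) = k" using geod_sub[OF p V(1), of 0 k] len k by simp
  moreover have "p ! 0 = r" using p pne unfolding geod_def by (simp add: hd_conv_nth)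
  ultimately show ?thesis using e k by auto
qed

lemma mid_ex:
  assumes V: "a \<in> V" "b \<in> V" and d2: "dd a b = 2"
  shows "\<exists>w. E a w \<and> E w b"
proof -
  obtain p where p: "geod p a b" using geod_ex V by blast
  then have len: "length p = 3" using d2 unfolding geod_def by simp
  have e1: "E (p!0) (p!1)" using walk_nth[of E p 0] p len unfolding geod_def by auto
  have e2: "E (p!1) (p!2)" using walk_nth[of E p 1] p len unfolding geod_def by (auto simp: numeral_2_eq_2)
  note e = e1 e2
  have pne: "p \<noteq> []" using p geod_ne by blast
  have "p ! 0 = a" using p pne unfolding geod_def by (simp add: hd_conv_nth)
  moreover have "p ! 2 = b"
  proof -
    have "last p = p ! (length p - 1)" using pne by (simp add: last_conv_nth)
    then show ?thesis using p len unfolding geod_def by simp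
  qed
  ultimately show ?thesis using e by auto
qed

lemma walk2_uniq:
  assumes "E a m" "E m b" "E a m'" "E m' b" "dd a b = 2"
  shows "m = m'"
proof -
  have V: "a \<in> V" "b \<in> V" using assms E_V by auto
  have "geod [a, m, b] a b" using assms unfolding geod_def by simp
  moreover have "geod [a, m', b] a b" using assms unfolding geod_def by simp
  ultimately show ?thesis using geod_uniq[OF V] by blast
qed

lemma d_two:
  assumes "E a m" "E m b" "a \<noteq> b" "\<not> E a b"
  shows "dd a b = 2"
proof -
  have V: "a \<in> V" "b \<in> V" using assms E_V by auto
  have "dd a b \<le> 2" using gdist_le[of E "[a,m,b]" a b] assms by simp
  moreover have "dd a b \<noteq> 0" using d_zero[OF V] assms by auto
  moreover have "dd a b \<noteq> 1" using d_one[OF V] assms by auto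
  ultimately show ?thesis by linarith
qed

lemma walk3_geod:
  assumes "E a b" "E b c" "E c e" "dd a e = 3"
  shows "geod [a, b, c, e] a e"
  using assms unfolding geod_def by simp

definition icirc :: "(int \<Rightarrow> 'a) \<Rightarrow> int \<Rightarrow> bool" where
  "icirc c n \<longleftrightarrow> 3 \<le> n \<and> (\<forall>i. E (c i) (c (i+1))) \<and> (\<forall>i j. c i = c j \<longleftrightarrow> i mod n = j mod n)"

lemma icirc_n: "icirc c n \<Longrightarrow> 3 \<le> n" unfolding icirc_def by auto
lemma icirc_E: "icirc c n \<Longrightarrow> E (c i) (c (i+1))" unfolding icirc_def by auto
lemma icirc_E2: "icirc c n \<Longrightarrow> E (c (i+1)) (c i)" using icirc_E E_sym by blast
lemma icirc_Em: "icirc c n \<Longrightarrow> E (c i) (c (i - 1))" using icirc_E[of c n "i - 1"] E_sym by simp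
lemma icirc_Ep: "icirc c n \<Longrightarrow> E (c (i - 1)) (c i)" using icirc_E[of c n "i - 1"] by simp
lemma icirc_eq: "icirc c n \<Longrightarrow> c i = c j \<longleftrightarrow> i mod n = j mod n" unfolding icirc_def by auto
lemma icirc_V: "icirc c n \<Longrightarrow> c i \<in> V" using icirc_E E_V by blast
lemma icirc_mod: "icirc c n \<Longrightarrow> c (i mod n) = c i" using icirc_eq by simp
lemma icirc_per: "icirc c n \<Longrightarrow> c (i + n) = c i" using icirc_eq by simp
lemma icirc_perm: "icirc c n \<Longrightarrow> c (i - n) = c i" using icirc_eq by simp

lemma icirc_eq_dvd: "icirc c n \<Longrightarrow> c i = c j \<longleftrightarrow> n dvd (i - j)"
  using icirc_eq mod_eq_dvd_iff by blast

lemma icirc_neq: "icirc c n \<Longrightarrow> 0 < j - i \<Longrightarrow> j - i < n \<Longrightarrow> c i \<noteq> c j"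
proof
  assume ic: "icirc c n" and h: "0 < j - i" "j - i < n" and eq: "c i = c j"
  then have "n dvd (j - i)" using icirc_eq_dvd[OF ic, of j i] by simp
  then have "n \<le> j - i" using zdvd_imp_le h by blast
  then show False using h by simp
qed

lemma icirc_orient:
  assumes ic: "icirc c n" and s: "s = 1 \<or> s = -1"
  shows "icirc (\<lambda>k. c (p + s * k)) n"
  unfolding icirc_def
proof (intro conjI allI)
  show "3 \<le> n" using icirc_n[OF ic] .
next
  fix i show "E (c (p + s * i)) (c (p + s * (i + 1)))"
  proof (cases "s = 1")
    case True
    then show ?thesis using icirc_E[OF ic, of "p + i"] by (simp add: add.assoc)
  next
    case False
    then have "s = -1" using s by simp
    moreover have "p + - 1 * (i + 1) = p - i - 1" by simp
    moreover have "p + - 1 * i = p - i" by simp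
    ultimately show ?thesis using icirc_Em[OF ic, of "p - i"] by (simp only:)
  qed
next
  fix i j
  have "c (p + s * i) = c (p + s * j) \<longleftrightarrow> n dvd (s * (i - j))"
    using icirc_eq_dvd[OF ic] by (simp add: algebra_simps)
  also have "\<dots> \<longleftrightarrow> n dvd (i - j)"
  proof (cases "s = 1")
    case True then show ?thesis by simp
  next
    case False
    then have "s * (i - j) = - (i - j)" using s by simp
    then show ?thesis by (simp only: dvd_minus_iff)
  qed
  also have "\<dots> \<longleftrightarrow> i mod n = j mod n" using mod_eq_dvd_iff by blast
  finally show "c (p + s * i) = c (p + s * j) \<longleftrightarrow> i mod n = j mod n" .
qed

lemma icirc_rot: "icirc c n \<Longrightarrow> icirc (\<lambda>k. c (p + k)) n"
  using icirc_orient[of c n 1 p] by simp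

definition lcirc :: "'a list \<Rightarrow> bool" where
  "lcirc xs \<longleftrightarrow> 3 \<le> length xs \<and> distinct xs \<and> walk E (xs @ [hd xs])"

definition small :: "int \<Rightarrow> bool" where
  "small n \<longleftrightarrow> (\<forall>xs. lcirc xs \<longrightarrow> int (length xs) < n \<longrightarrow> (\<forall>a\<in>set xs. \<forall>b\<in>set xs. dd a b \<le> 2))"

lemma smallD: "small n \<Longrightarrow> lcirc xs \<Longrightarrow> int (length xs) < n \<Longrightarrow> a \<in> set xs \<Longrightarrow> b \<in> set xs \<Longrightarrow> dd a b \<le> 2"
  unfolding small_def by blast

definition arc :: "(int \<Rightarrow> 'a) \<Rightarrow> int \<Rightarrow> nat \<Rightarrow> 'a list" where
  "arc c i m = map (\<lambda>k. c (i + int k)) [0..<m]"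

lemma arc_length[simp]: "length (arc c i m) = m" unfolding arc_def by simp
lemma arc_nth[simp]: "k < m \<Longrightarrow> arc c i m ! k = c (i + int k)" unfolding arc_def by simp
lemma arc_Suc: "arc c i (Suc m) = arc c i m @ [c (i + int m)]" unfolding arc_def by simp
lemma arc_0[simp]: "arc c i 0 = []" unfolding arc_def by simp
lemma arc_Nil_iff[simp]: "arc c i m = [] \<longleftrightarrow> m = 0" unfolding arc_def by simp
lemma arc_set: "x \<in> set (arc c i m) \<longleftrightarrow> (\<exists>k<m. x = c (i + int k))" unfolding arc_def by auto
lemma arc_hd: "0 < m \<Longrightarrow> hd (arc c i m) = c i" unfolding arc_def by (simp add: hd_map)
lemma arc_last: "0 < m \<Longrightarrow> last (arc c i m) = c (i + int m - 1)"
  by (cases m) (auto simp: arc_Suc)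

lemma arc_walk: "icirc c n \<Longrightarrow> 0 < m \<Longrightarrow> walk E (arc c i m)"
proof (induction m)
  case 0 then show ?case by simp
next
  case (Suc m)
  show ?case
  proof (cases "m = 0")
    case True then show ?thesis by (simp add: arc_def)
  next
    case False
    then have w: "walk E (arc c i m)" using Suc.IH Suc.prems by simp
    have e: "E (last (arc c i m)) (c (i + int m))"
      using arc_last[of m c i] False icirc_Ep[OF Suc.prems(1), of "i + int m"] by simp
    have ne: "arc c i m \<noteq> []" using False by simp
    have "walk E (arc c i m @ [c (i + int m)])"
      using walk_append[OF ne, of "[c (i + int m)]" E] w e by simp
    then show ?thesis by (simp only: arc_Suc)
  qed
qed

lemma arc_distinct: "icirc c n \<Longrightarrow> int m \<le> n \<Longrightarrow> distinct (arc c i m)"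
proof (rule distinct_conv_nth[THEN iffD2], intro allI impI)
  fix k1 k2 assume ic: "icirc c n" and m: "int m \<le> n" and k: "k1 < length (arc c i m)" "k2 < length (arc c i m)" "k1 \<noteq> k2"
  show "arc c i m ! k1 \<noteq> arc c i m ! k2"
  proof (cases "k1 < k2")
    case True
    have h1: "0 < (i + int k2) - (i + int k1)" and h2: "(i + int k2) - (i + int k1) < n" using True k m by simp_all
    have "c (i + int k1) \<noteq> c (i + int k2)" by (rule icirc_neq[OF ic h1 h2])
    moreover have "arc c i m ! k1 = c (i + int k1)" "arc c i m ! k2 = c (i + int k2)" using k by simp_all
    ultimately show ?thesis by metis
  next
    case False
    then have "k2 < k1" using k by simp
    have h1: "0 < (i + int k1) - (i + int k2)" and h2: "(i + int k1) - (i + int k2) < n" using \<open>k2 < k1\<close> k m by simp_all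
    have "c (i + int k2) \<noteq> c (i + int k1)" by (rule icirc_neq[OF ic h1 h2])
    moreover have "arc c i m ! k1 = c (i + int k1)" "arc c i m ! k2 = c (i + int k2)" using k by simp_all
    ultimately show ?thesis by metis
  qed
qed

end



context geo begin

lemma icirc_refl: "icirc c n \<Longrightarrow> icirc (\<lambda>k. c (p - k)) n"
  using icirc_orient[of c n "-1" p] by simp

lemma theta:
  assumes ic: "icirc c n" and sm: "small n" and a: "2 \<le> a" "a \<le> n - 2"
    and Qw: "walk E Q" and Qh: "hd Q = c i" and Ql: "last Q = c (i + a)" and Qd: "distinct Q"
    and off: "\<forall>t. 0 < t \<and> t < length Q - 1 \<longrightarrow> Q ! t \<notin> range c"
    and l1: "int (length Q) - 1 < a" and l2: "int (length Q) - 1 < n - a"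
    and t: "0 \<le> t" "t \<le> a" "0 \<le> t'" "t' \<le> a"
  shows "dd (c (i+t)) (c (i+t')) \<le> 2"
proof -
  have Qne: "Q \<noteq> []" using Qw by auto
  have hl0: "0 < (i + a) - i" "(i + a) - i < n" using a by simp_all
  have hl: "c i \<noteq> c (i + a)" by (rule icirc_neq[OF ic hl0])
  obtain x Q' where Qx: "Q = x # Q'" using Qne by (cases Q) auto
  have x: "x = c i" using Qh Qx by simp
  have Q'ne: "Q' \<noteq> []" using Qx Qh Ql hl by auto
  have tlQ: "tl Q = Q'" using Qx by simp
  define ys where "ys = arc c i (nat a) @ rev Q'"
  have na: "int (nat a) = a" "0 < nat a" using a by auto
  have arcne: "arc c i (nat a) \<noteq> []" using na by simp
  have disj: "set (arc c i (nat a)) \<inter> set (rev Q') = {}"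
  proof (rule ccontr)
    assume "set (arc c i (nat a)) \<inter> set (rev Q') \<noteq> {}"
    then obtain y where y1: "y \<in> set (arc c i (nat a))" and y2: "y \<in> set Q'" by auto
    obtain k where k: "k < nat a" "y = c (i + int k)" using y1 arc_set by blast
    obtain j where j: "j < length Q'" "Q' ! j = y" using y2 by (metis in_set_conv_nth)
    have Qj: "Q ! Suc j = y" using Qx j by simp
    show False
    proof (cases "Suc j < length Q - 1")
      case True
      then have "Q ! Suc j \<notin> range c" using off by simp
      then show False using Qj k by auto
    next
      case False
      then have "Suc j = length Q - 1" using Qx j by simp
      then have "y = last Q" using Qj Qne by (simp add: last_conv_nth)
      then have "c (i + int k) = c (i + a)" using Ql k by simp
      moreover have "0 < (i + a) - (i + int k)" "(i + a) - (i + int k) < n" using k na a by linarith+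
      ultimately show False using icirc_neq[OF ic] by blast
    qed
  qed
  have lc: "lcirc ys"
    unfolding lcirc_def
  proof (intro conjI)
    show "3 \<le> length ys" unfolding ys_def using na a Q'ne by (cases Q') auto
    show "distinct ys" unfolding ys_def using arc_distinct[OF ic, of "nat a" i] na a disj Qd Qx by simp
    have hy: "hd ys = c i" unfolding ys_def using arcne arc_hd[OF na(2)] by simp
    have "ys @ [hd ys] = arc c i (nat a) @ rev Q" using hy Qx x by (simp add: ys_def)
    moreover have "walk E (arc c i (nat a) @ rev Q)"
    proof (subst walk_append)
      show "arc c i (nat a) \<noteq> []" "rev Q \<noteq> []" using arcne Qne by auto
      have "E (c (i + a - 1)) (c (i + a))" using icirc_Ep[OF ic, of "i + a"] .
      then show "walk E (arc c i (nat a)) \<and> walk E (rev Q) \<and> E (last (arc c i (nat a))) (hd (rev Q))"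
        using arc_walk[OF ic na(2)] walk_rev[OF E_sym Qw] arc_last[OF na(2)] na Ql Qne
        by (simp add: hd_rev)
    qed
    ultimately show "walk E (ys @ [hd ys])" by simp
  qed
  have len: "int (length ys) < n" unfolding ys_def using l2 Qx na by simp
  have mem: "c (i + s) \<in> set ys" if s: "0 \<le> s" "s \<le> a" for s
  proof (cases "s < a")
    case True
    then have "nat s < nat a" using s by simp
    then have "c (i + int (nat s)) \<in> set (arc c i (nat a))" unfolding arc_set by blast
    then show ?thesis unfolding ys_def using s by simp
  next
    case False
    then have "s = a" using s by simp
    moreover have "last Q \<in> set Q'" using Qx Q'ne by simp
    ultimately show ?thesis unfolding ys_def using Ql by simp
  qed
  show ?thesis using smallD[OF sm lc len mem[OF t(1,2)] mem[OF t(3,4)]] .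
qed

lemma theta2:
  assumes ic: "icirc c n" and sm: "small n" and a: "2 \<le> a" "a \<le> n - 2"
    and Qw: "walk E Q" and Qh: "hd Q = c i" and Ql: "last Q = c (i + a)" and Qd: "distinct Q"
    and off: "\<forall>t. 0 < t \<and> t < length Q - 1 \<longrightarrow> Q ! t \<notin> range c"
    and l1: "int (length Q) - 1 < a" and l2: "int (length Q) - 1 < n - a"
    and t: "a \<le> t" "t \<le> n" "a \<le> t'" "t' \<le> n"
  shows "dd (c (i+t)) (c (i+t')) \<le> 2"
proof -
  define c' where "c' = (\<lambda>k. c ((i + a) + k))"
  have ic': "icirc c' n" unfolding c'_def by (rule icirc_rot[OF ic])
  have Qne: "Q \<noteq> []" using Qw by auto
  have h1: "hd (rev Q) = c' 0" unfolding c'_def using Ql Qne by (simp add: hd_rev)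
  have h2: "last (rev Q) = c' (0 + (n - a))" unfolding c'_def using Qh Qne icirc_per[OF ic, of i]
    by (simp add: last_rev)
  have off': "\<forall>t. 0 < t \<and> t < length (rev Q) - 1 \<longrightarrow> rev Q ! t \<notin> range c'"
  proof (intro allI impI)
    fix s assume s: "0 < s \<and> s < length (rev Q) - 1"
    have "s < length Q - 1" using s by simp
    then have "s < length Q" by linarith
    then have "rev Q ! s = Q ! (length Q - 1 - s)" by (simp add: rev_nth)
    moreover have "0 < length Q - 1 - s \<and> length Q - 1 - s < length Q - 1" using s by auto
    ultimately have "rev Q ! s \<notin> range c" using off by simp
    then show "rev Q ! s \<notin> range c'" unfolding c'_def by auto
  qed
  have "dd (c' (0 + (t - a))) (c' (0 + (t' - a))) \<le> 2"
    apply (rule theta[OF ic' sm _ _ walk_rev[OF E_sym Qw] h1 h2 _ off'])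
    using a l1 l2 t Qd by auto
  then show ?thesis unfolding c'_def by simp
qed

lemma seg0:
  assumes ic: "icirc c n" and sm: "small n" and sg: "geod \<sigma> (c p) (c q)" and neq: "c p \<noteq> c q"
    and off: "\<forall>t. 0 < t \<and> t < length \<sigma> - 1 \<longrightarrow> \<sigma> ! t \<notin> range c"
  shows "(length \<sigma> = 2 \<and> (c p = c (q - 1) \<or> c p = c (q + 1))) \<or>
         (\<forall>k. dd (c q) (c k) \<le> 2 \<and> dd (c p) (c k) \<le> 2)"
proof -
  have n3: "3 \<le> n" using icirc_n[OF ic] .
  have Vp: "c p \<in> V" using icirc_V[OF ic] .
  define l where "l = dd (c p) (c q)"
  have lenS: "length \<sigma> = Suc l" using sg unfolding geod_def l_def by simp
  have "l \<noteq> 0" using d_zero[OF icirc_V[OF ic, of p] icirc_V[OF ic, of q]] neq unfolding l_def by auto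
  then have l1: "1 \<le> l" by simp
  define a where "a = (q - p) mod n"
  have a0: "0 \<le> a" "a < n" unfolding a_def using n3 by auto
  have cq: "c (p + a) = c q" using icirc_eq[OF ic] unfolding a_def by (simp add: mod_add_right_eq)
  have an0: "a \<noteq> 0" using cq neq by auto
  have na: "int (nat a) = a" using a0 by simp
  define w1 where "w1 = arc c p (nat a + 1)"
  have w1w: "walk E w1" unfolding w1_def using arc_walk[OF ic] by simp
  have w1h: "hd w1 = c p" unfolding w1_def using arc_hd by simp
  have w1l: "last w1 = c q" unfolding w1_def using arc_last[of "nat a + 1" c p] na cq by simp
  have "l \<le> nat a" using gdist_le[OF w1w w1h w1l] unfolding w1_def l_def by simp
  then have la: "int l \<le> a" using na by linarith
  define c' where "c' = (\<lambda>k. c (p + (-1) * k))"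
  have ic': "icirc c' n" unfolding c'_def using icirc_orient[OF ic, of "-1" p] by simp
  define w2 where "w2 = arc c' 0 (nat (n - a) + 1)"
  have w2w: "walk E w2" unfolding w2_def using arc_walk[OF ic'] by simp
  have w2h: "hd w2 = c p" unfolding w2_def c'_def using arc_hd by simp
  have nna: "int (nat (n - a)) = n - a" using a0 by simp
  have w2l: "last w2 = c q"
  proof -
    have "last w2 = c (p - (n - a))" unfolding w2_def c'_def using arc_last[of "nat (n - a) + 1" c' 0] nna
      by (simp add: c'_def)
    also have "\<dots> = c (p + a)" using icirc_perm[OF ic, of "p + a"] by (simp add: algebra_simps)
    finally show ?thesis using cq by simp
  qed
  have "l \<le> nat (n - a)" using gdist_le[OF w2w w2h w2l] unfolding w2_def l_def by simp
  then have lb: "int l \<le> n - a" using nna by linarith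
  show ?thesis
  proof (cases "int l = a")
    case True
    have g1: "geod w1 (c p) (c q)" using w1w w1h w1l unfolding geod_def w1_def l_def using True na
      by (simp add: l_def)
    have eq: "w1 = \<sigma>" using geod_uniq[OF Vp icirc_V[OF ic] g1 sg] .
    show ?thesis
    proof (cases "l = 1")
      case True
      then have "a = 1" using \<open>int l = a\<close> by simp
      have "n dvd (p + a - q)" using icirc_eq_dvd[OF ic, of "p+a" q] cq by simp
      then have "c p = c (q - 1)" using icirc_eq_dvd[OF ic, of p "q - 1"] \<open>a = 1\<close> by (simp add: algebra_simps)
      then show ?thesis using lenS True by simp
    next
      case False
      then have "1 < length \<sigma> - 1" using lenS l1 by simp
      then have "\<sigma> ! 1 \<notin> range c" using off by simp
      moreover have "w1 ! 1 = c (p + 1)" unfolding w1_def using an0 a0 by (simp add: nat_less_iff)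
      ultimately show ?thesis using eq by auto
    qed
  next
    case False
    show ?thesis
    proof (cases "int l = n - a")
      case True
      have g2: "geod w2 (c p) (c q)" using w2w w2h w2l unfolding geod_def w2_def l_def using True nna
        by (simp add: l_def)
      have eq: "w2 = \<sigma>" using geod_uniq[OF Vp icirc_V[OF ic] g2 sg] .
      show ?thesis
      proof (cases "l = 1")
        case True
        then have "a = n - 1" using \<open>int l = n - a\<close> by simp
        have "n dvd (p + a - q)" using icirc_eq_dvd[OF ic, of "p+a" q] cq by simp
        moreover have "n dvd n" by simp
        ultimately have "n dvd (n - (p + a - q))" using dvd_diff by blast
        moreover have "n - (p + a - q) = (q + 1) - p" using \<open>a = n - 1\<close> by simp
        ultimately have "c (q + 1) = c p" using icirc_eq_dvd[OF ic, of "q + 1" p] by simp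
        then show ?thesis using lenS True by simp
      next
        case False
        then have "1 < length \<sigma> - 1" using lenS l1 by simp
        then have "\<sigma> ! 1 \<notin> range c" using off by simp
        moreover have "w2 ! 1 = c (p - 1)" unfolding w2_def c'_def using a0 by simp
        ultimately show ?thesis using eq by auto
      qed
    next
      case False2: False
      have lt1: "int (length \<sigma>) - 1 < a" using la False lenS by simp
      have lt2: "int (length \<sigma>) - 1 < n - a" using lb False2 lenS by simp
      have a2: "2 \<le> a" "a \<le> n - 2" using lt1 lt2 lenS l1 by auto
      have sw: "walk E \<sigma>" "hd \<sigma> = c p" "last \<sigma> = c (p + a)" using sg cq unfolding geod_def by auto
      have sd: "distinct \<sigma>" using geod_distinct[OF sg Vp] .
      have R: "\<forall>k. dd (c q) (c k) \<le> 2 \<and> dd (c p) (c k) \<le> 2"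
      proof
        fix k
        define t where "t = (k - p) mod n"
        have t0: "0 \<le> t" "t < n" unfolding t_def using n3 by auto
        have ck: "c (p + t) = c k" using icirc_eq[OF ic] unfolding t_def by (simp add: mod_add_right_eq)
        have cp: "c (p + 0) = c p" "c (p + n) = c p" using icirc_per[OF ic] by auto
        show "dd (c q) (c k) \<le> 2 \<and> dd (c p) (c k) \<le> 2"
        proof (cases "t \<le> a")
          case True
          have "dd (c (p + a)) (c (p + t)) \<le> 2"
            by (rule theta[OF ic sm a2 sw sd off lt1 lt2]) (use True t0 a2 in auto)
          moreover have "dd (c (p + 0)) (c (p + t)) \<le> 2"
            by (rule theta[OF ic sm a2 sw sd off lt1 lt2]) (use True t0 a2 in auto)
          ultimately show ?thesis using ck cq cp by simp
        next
          case False
          have "dd (c (p + a)) (c (p + t)) \<le> 2"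
            by (rule theta2[OF ic sm a2 sw sd off lt1 lt2]) (use False t0 a2 in auto)
          moreover have "dd (c (p + n)) (c (p + t)) \<le> 2"
            by (rule theta2[OF ic sm a2 sw sd off lt1 lt2]) (use False t0 a2 in auto)
          ultimately show ?thesis using ck cq cp by simp
        qed
      qed
      then show ?thesis by blast
    qed
  qed
qed

end



context geo begin

lemma lpen:
  assumes ic: "icirc c n" and sm: "small n" and bad: "3 \<le> dd (c q) (c k0)" and neq: "c p \<noteq> c q"
    and e: "E w (c q)" and l: "dd (c p) w + 1 = dd (c p) (c q)"
  shows "w = c (q - 1) \<or> w = c (q + 1)"
proof -
  have Vp: "c p \<in> V" "c q \<in> V" "w \<in> V" using icirc_V[OF ic] e E_V by auto
  obtain g0 where g0: "geod g0 (c p) w" using geod_ex Vp by blast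
  define g where "g = g0 @ [c q]"
  have g: "geod g (c p) (c q)" unfolding g_def using geod_snoc[OF g0 e l] .
  define D where "D = dd (c p) (c q)"
  have lenG: "length g = Suc D" using g unfolding geod_def D_def by simp
  have len0: "length g0 = D" using lenG unfolding g_def by simp
  have "D \<noteq> 0" using d_zero[OF Vp(1,2)] neq unfolding D_def by auto
  then have D1: "1 \<le> D" by simp
  have gd: "distinct g" using geod_distinct[OF g Vp(1)] .
  have gne: "g \<noteq> []" using lenG by auto
  have g0th: "g ! 0 = c p" using g hd_conv_nth[OF gne] unfolding geod_def by simp
  have gD: "g ! D = c q"
  proof -
    have "g \<noteq> []" using lenG by auto
    then have "last g = g ! (length g - 1)" by (simp add: last_conv_nth)
    then show ?thesis using g lenG unfolding geod_def by simp
  qed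
  define T where "T = {t. t < D \<and> g ! t \<in> range c}"
  have finT: "finite T" unfolding T_def by simp
  have T0: "0 \<in> T" unfolding T_def using D1 g0th by auto
  define t0 where "t0 = Max T"
  have t0T: "t0 \<in> T" unfolding t0_def using finT T0 Max_in by blast
  have t0max: "\<And>t. t \<in> T \<Longrightarrow> t \<le> t0" unfolding t0_def using finT by simp
  have t0D: "t0 < D" using t0T unfolding T_def by simp
  obtain p' where p': "g ! t0 = c p'" using t0T unfolding T_def by auto
  define s where "s = drop t0 g"
  have sgeod: "geod s (c p') (c q)"
  proof -
    have w: "walk E s" unfolding s_def using walk_drop[of E g t0] g t0D lenG unfolding geod_def by simp
    have h: "hd s = c p'" unfolding s_def using p' t0D lenG by (simp add: hd_drop_conv_nth)
    have la: "last s = c q" unfolding s_def using g t0D lenG unfolding geod_def by simp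
    have "dd (g ! t0) (g ! D) = D - t0" using geod_sub[OF g Vp(1), of t0 D] t0D lenG by simp
    then have "length s = Suc (dd (c p') (c q))" unfolding s_def using lenG p' gD t0D by simp
    then show ?thesis using w h la unfolding geod_def by simp
  qed
  have neq': "c p' \<noteq> c q"
  proof
    assume "c p' = c q"
    then have "g ! t0 = g ! D" using p' gD by simp
    then show False using gd t0D lenG by (simp add: nth_eq_iff_index_eq)
  qed
  have off: "\<forall>t. 0 < t \<and> t < length s - 1 \<longrightarrow> s ! t \<notin> range c"
  proof (intro allI impI)
    fix t assume t: "0 < t \<and> t < length s - 1"
    have ls: "length s = Suc D - t0" unfolding s_def using lenG by simp
    have st: "s ! t = g ! (t0 + t)" unfolding s_def using t ls lenG t0D by (simp add: nth_drop)
    show "s ! t \<notin> range c"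
    proof
      assume "s ! t \<in> range c"
      then have "t0 + t \<in> T" unfolding T_def using st t ls by auto
      then show False using t0max t by fastforce
    qed
  qed
  from seg0[OF ic sm sgeod neq' off]
  show ?thesis
  proof
    assume h: "length s = 2 \<and> (c p' = c (q - 1) \<or> c p' = c (q + 1))"
    have "length s = Suc D - t0" unfolding s_def using lenG by simp
    then have "t0 = D - 1" using h t0D by arith
    then have "g ! t0 = w"
    proof -
      assume t: "t0 = D - 1"
      have "g ! t0 = g0 ! (D - 1)" unfolding g_def using t len0 D1 by (simp add: nth_append)
      also have "\<dots> = last g0"
      proof -
        have "g0 \<noteq> []" using len0 D1 by auto
        then show ?thesis using len0 by (simp add: last_conv_nth)
      qed
      finally show ?thesis using g0 unfolding geod_def by simp
    qed
    then show ?thesis using h p' by simp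
  next
    assume "\<forall>k. dd (c q) (c k) \<le> 2 \<and> dd (c p') (c k) \<le> 2"
    then have "dd (c q) (c k0) \<le> 2" by blast
    then show ?thesis using bad by linarith
  qed
qed

lemma dist_le_arc:
  assumes ic: "icirc c n" and a: "0 \<le> a"
  shows "int (dd (c i) (c (i + a))) \<le> a"
proof -
  have na: "int (nat a) = a" using a by simp
  have w: "walk E (arc c i (nat a + 1))" using arc_walk[OF ic] by simp
  have h: "hd (arc c i (nat a + 1)) = c i" using arc_hd by simp
  have l: "last (arc c i (nat a + 1)) = c (i + a)" using arc_last[of "nat a + 1" c i] na by simp
  have "dd (c i) (c (i + a)) \<le> nat a" using gdist_le[OF w h l] by simp
  then show ?thesis using na by linarith
qed

lemma dist_le_arc2:
  assumes ic: "icirc c n" and a: "0 \<le> a" "a \<le> n"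
  shows "int (dd (c i) (c (i + a))) \<le> n - a"
proof -
  have ic': "icirc (\<lambda>k. c (i - k)) n" using icirc_refl[OF ic] .
  have "int (dd (c (i - 0)) (c (i - (0 + (n - a))))) \<le> n - a"
    using dist_le_arc[OF ic', of "n - a" 0] a by simp
  moreover have "c (i - (0 + (n - a))) = c (i + a)" using icirc_per[OF ic, of "i - (n - a)"] by simp
  ultimately show ?thesis by simp
qed

lemma cyc_tri:
  fixes a b n :: int
  assumes "0 < a" "a < n" "0 < b" "b < n" "a \<noteq> b"
  shows "min a (n - a) \<le> min b (n - b) + min ((a - b) mod n) (n - (a - b) mod n)"
proof (cases "b < a")
  case True
  then have "(a - b) mod n = a - b" using assms by simp
  then show ?thesis using True assms unfolding min_def by (simp split: if_split)
next
  case False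
  have "(a - b) mod n = (a - b + n) mod n" by simp
  also have "\<dots> = a - b + n" using assms False by (intro mod_pos_pos_trivial) auto
  finally have "(a - b) mod n = a - b + n" .
  then show ?thesis using False assms unfolding min_def by (simp split: if_split)
qed

lemma lgood:
  assumes ic: "icirc c n" and sm: "small n"
  shows "(\<forall>i a. 0 < a \<and> a < n \<longrightarrow> int (dd (c i) (c (i + a))) = min a (n - a)) \<or>
         (\<exists>p q. c p \<noteq> c q \<and> (\<forall>k. dd (c p) (c k) \<le> 2) \<and> (\<forall>k. dd (c q) (c k) \<le> 2))"
proof (cases "\<exists>i a. 0 < a \<and> a < n \<and> int (dd (c i) (c (i + a))) < min a (n - a)")
  case False
  have "int (dd (c i) (c (i + a))) = min a (n - a)" if ia: "0 < a" "a < n" for i a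
  proof -
    have h1: "int (dd (c i) (c (i + a))) \<le> a" using dist_le_arc[OF ic, of a i] ia by simp
    have h2: "int (dd (c i) (c (i + a))) \<le> n - a" using dist_le_arc2[OF ic, of a i] ia by simp
    have h3: "\<not> int (dd (c i) (c (i + a))) < min a (n - a)" using False ia by blast
    show ?thesis using h1 h2 h3 by (auto simp: min_def)
  qed
  then show ?thesis by blast
next
  case True
  have n3: "3 \<le> n" using icirc_n[OF ic] .
  define P where "P = (\<lambda>D. \<exists>i a. 0 < a \<and> a < n \<and> dd (c i) (c (i + a)) = D \<and> int D < min a (n - a))"
  have "\<exists>D. P D" using True unfolding P_def by blast
  then have PL: "P (Least P)" by (rule LeastI_ex)
  define D0 where "D0 = Least P"
  have nP: "\<And>D. D < D0 \<Longrightarrow> \<not> P D" unfolding D0_def by (rule not_less_Least)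
  obtain i a where ia: "0 < a" "a < n" "dd (c i) (c (i + a)) = D0" "int D0 < min a (n - a)"
    using PL unfolding P_def D0_def by blast
  have Vi: "c i \<in> V" "c (i + a) \<in> V" using icirc_V[OF ic] by auto
  obtain g where g: "geod g (c i) (c (i + a))" using geod_ex Vi by blast
  have lenG: "length g = Suc D0" using g ia unfolding geod_def by simp
  have gne: "g \<noteq> []" using lenG by auto
  have g0: "g ! 0 = c i" using g hd_conv_nth[OF gne] unfolding geod_def by simp
  have gD: "g ! D0 = c (i + a)"
  proof -
    have "g \<noteq> []" using lenG by auto
    then have "last g = g ! (length g - 1)" by (simp add: last_conv_nth)
    then show ?thesis using g lenG unfolding geod_def by simp
  qed
  have neq: "c i \<noteq> c (i + a)"
  proof -
    have "0 < (i + a) - i" "(i + a) - i < n" using ia by simp_all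
    then show ?thesis by (rule icirc_neq[OF ic])
  qed
  have off: "\<forall>t. 0 < t \<and> t < length g - 1 \<longrightarrow> g ! t \<notin> range c"
  proof (intro allI impI)
    fix t assume t: "0 < t \<and> t < length g - 1"
    then have tD: "0 < t" "t < D0" using lenG by auto
    show "g ! t \<notin> range c"
    proof
      assume "g ! t \<in> range c"
      then obtain k where k: "g ! t = c k" by auto
      define b where "b = (k - i) mod n"
      have b0: "0 \<le> b" "b < n" unfolding b_def using n3 by auto
      have cb: "c (i + b) = c k" using icirc_eq[OF ic] unfolding b_def by (simp add: mod_add_right_eq)
      have d1: "dd (c i) (c (i + b)) = t" using geod_sub[OF g Vi(1), of 0 t] tD lenG g0 k cb by simp
      have d2: "dd (c (i + b)) (c (i + a)) = D0 - t" using geod_sub[OF g Vi(1), of t D0] tD lenG gD k cb by simp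
      have "b \<noteq> 0" using d1 tD by (auto simp: gdist_refl)
      then have b1: "0 < b" using b0 by simp
      define a' where "a' = (a - b) mod n"
      have a'0: "0 \<le> a'" "a' < n" unfolding a'_def using n3 by auto
      have "((i + b) + a') mod n = ((i + b) + (a - b)) mod n" unfolding a'_def by (simp add: mod_add_right_eq)
      then have ca': "c ((i + b) + a') = c (i + a)" using icirc_eq[OF ic, of "(i + b) + a'" "i + a"] by simp
      have "a' \<noteq> 0" using d2 ca' tD by (auto simp: gdist_refl)
      then have a'1: "0 < a'" using a'0 by simp
      have "a \<noteq> b"
      proof
        assume "a = b" then have "a' = 0" unfolding a'_def by simp
        then show False using a'1 by simp
      qed
      have h1: "\<not> (int t < min b (n - b))" using nP[OF tD(2)] b1 b0 d1 unfolding P_def by blast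
      have np: "\<not> P (D0 - t)" using nP tD by simp
      have d2': "dd (c (i + b)) (c ((i + b) + a')) = D0 - t" using d2 ca' by simp
      have "\<not> (0 < a' \<and> a' < n \<and> dd (c (i + b)) (c ((i + b) + a')) = D0 - t \<and> int (D0 - t) < min a' (n - a'))"
        using np unfolding P_def by blast
      then have h2: "\<not> (int (D0 - t) < min a' (n - a'))" using a'1 a'0 d2' by simp
      have "min a (n - a) \<le> min b (n - b) + min a' (n - a')"
        unfolding a'_def using cyc_tri[OF ia(1,2) b1 b0(2) \<open>a \<noteq> b\<close>] .
      then show False using h1 h2 ia(4) tD by linarith
    qed
  qed
  from seg0[OF ic sm g neq off]
  show ?thesis
  proof
    assume h: "length g = 2 \<and> (c i = c (i + a - 1) \<or> c i = c (i + a + 1))"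
    then have "D0 = 1" using lenG by simp
    show ?thesis
    proof (cases "c i = c (i + a - 1)")
      case True
      have "\<not> (0 < (i + a - 1) - i \<and> (i + a - 1) - i < n)" using True icirc_neq[OF ic] by blast
      then have "a = 1" using ia by simp
      then show ?thesis using ia \<open>D0 = 1\<close> by simp
    next
      case False
      then have c2: "c i = c (i + a + 1)" using h by simp
      have "\<not> (0 < (i + a + 1) - i \<and> (i + a + 1) - i < n)" using c2 icirc_neq[OF ic] by blast
      then have "a = n - 1" using ia by simp
      then show ?thesis using ia \<open>D0 = 1\<close> by simp
    qed
  next
    assume "\<forall>k. dd (c (i + a)) (c k) \<le> 2 \<and> dd (c i) (c k) \<le> 2"
    then show ?thesis using neq by blast
  qed
qed

end



context geo begin

lemma iso_h5:
  assumes ic: "icirc c n" and iso: "\<forall>i a. 0 < a \<and> a < n \<longrightarrow> int (dd (c i) (c (i + a))) = min a (n - a)"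
  shows "isometric_circuit E (\<lambda>i. c (int i)) (nat n)"
  unfolding isometric_circuit_def embedded_circuit_def
proof (intro conjI allI impI)
  have n3: "3 \<le> n" using icirc_n[OF ic] .
  fix i assume "i < nat n"
  show "E (c (int i)) (c (int (Suc i)))" using icirc_E[OF ic, of "int i"] by (simp add: add.commute)
next
  have n3: "3 \<le> n" using icirc_n[OF ic] .
  show "inj_on (\<lambda>i. c (int i)) {..<nat n}"
  proof (rule inj_onI)
    fix i j assume ij: "i \<in> {..<nat n}" "j \<in> {..<nat n}" "c (int i) = c (int j)"
    then have "int i mod n = int j mod n" using icirc_eq[OF ic] by blast
    moreover have "int i mod n = int i" "int j mod n = int j" using ij n3 by auto
    ultimately show "i = j" by simp
  qed
next
  have n3: "3 \<le> n" using icirc_n[OF ic] .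
  have "c (int (nat n)) = c (0 + n)" using n3 by simp
  also have "\<dots> = c 0" using icirc_per[OF ic, of 0] .
  finally show "c (int (nat n)) = c (int 0)" by simp
next
  have n3: "3 \<le> n" using icirc_n[OF ic] .
  fix i j assume ij: "i < j \<and> j < nat n"
  define a where "a = int j - int i"
  have a: "0 < a" "a < n" using ij n3 unfolding a_def by auto
  have "int (dd (c (int i)) (c (int i + a))) = min a (n - a)" using iso a by blast
  moreover have "int i + a = int j" unfolding a_def by simp
  moreover have "int (min (j - i) (nat n + i - j)) = min a (n - a)"
  proof -
    have x: "int (j - i) = a" using ij unfolding a_def by (simp add: of_nat_diff)
    have y: "int (nat n + i - j) = n - a" using ij n3 unfolding a_def by (simp add: of_nat_diff)
    have "int (min (j - i) (nat n + i - j)) = min (int (j - i)) (int (nat n + i - j))" by (simp add: min_def)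
    then show ?thesis using x y by simp
  qed
  ultimately show "dd (c (int i)) (c (int j)) = min (j - i) (nat n + i - j)" by simp
qed

lemma lev_refl:
  assumes ic: "icirc f n" and lev: "\<forall>k. 0 \<le> k \<and> k < n \<longrightarrow> int (dd (f 0) (f k)) = min k (n - k)"
  shows "\<forall>k. 0 \<le> k \<and> k < n \<longrightarrow> int (dd (f (0 - 0)) (f (0 - k))) = min k (n - k)"
proof (intro allI impI)
  fix k assume k: "0 \<le> k \<and> k < n"
  show "int (dd (f (0 - 0)) (f (0 - k))) = min k (n - k)"
  proof (cases "k = 0")
    case True then show ?thesis using lev k by simp
  next
    case False
    have "f (0 - k) = f (n - k)" using icirc_per[OF ic, of "0 - k"] by simp
    moreover have "int (dd (f 0) (f (n - k))) = min (n - k) (n - (n - k))" using lev k False by simp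
    ultimately show ?thesis by (simp add: min.commute)
  qed
qed

lemma fbad:
  assumes ic: "icirc f n" and n: "n = 2 * L + 1" and L: "3 \<le> L"
    and lev: "\<forall>k. 0 \<le> k \<and> k < n \<longrightarrow> int (dd (f 0) (f k)) = min k (n - k)"
    and k: "1 \<le> k" "k \<le> L" and j: "L + 1 \<le> j" "j \<le> n - 1" and kj: "2 \<le> n - j - k"
  shows "3 \<le> dd (f k) (f j)"
proof (rule ccontr)
  assume "\<not> 3 \<le> dd (f k) (f j)"
  then have le2: "dd (f k) (f j) \<le> 2" by simp
  have V: "f 0 \<in> V" "f k \<in> V" "f j \<in> V" using icirc_V[OF ic] by auto
  have lk: "int (dd (f 0) (f k)) = k" using lev k n by auto
  have lj: "int (dd (f 0) (f j)) = n - j" using lev j n by auto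
  have "dd (f 0) (f j) \<le> dd (f 0) (f k) + dd (f k) (f j)" using d_tri[OF V] .
  then have eqs: "int (dd (f k) (f j)) = 2" "n - j - k = 2" using lk lj le2 kj by linarith+
  have sum: "dd (f 0) (f k) + dd (f k) (f j) = dd (f 0) (f j)" using eqs lk lj by linarith
  define f' where "f' = (\<lambda>t. f (0 - t))"
  have ic': "icirc f' n" unfolding f'_def using icirc_refl[OF ic] .
  define m where "m = nat (n - j)"
  have mi: "int m = n - j" unfolding m_def using j by simp
  define g where "g = arc f' 0 (m + 1)"
  have gw: "walk E g" unfolding g_def using arc_walk[OF ic'] by simp
  have gh: "hd g = f 0" unfolding g_def f'_def using arc_hd by simp
  have gl: "last g = f j"
  proof -
    have "last g = f (0 - (n - j))" unfolding g_def using arc_last[of "m + 1" f' 0] mi by (simp add: f'_def)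
    also have "\<dots> = f j" using icirc_perm[OF ic, of j] by simp
    finally show ?thesis .
  qed
  have glen: "length g = Suc (dd (f 0) (f j))" unfolding g_def using lj mi by simp
  have gg: "geod g (f 0) (f j)" using gw gh gl glen unfolding geod_def by simp
  have "g ! dd (f 0) (f k) = f k" using anc[OF V sum gg] .
  moreover have "g ! dd (f 0) (f k) = f (0 - k)"
  proof -
    have "dd (f 0) (f k) < m + 1" using lk mi eqs by linarith
    then have "g ! dd (f 0) (f k) = f' (0 + int (dd (f 0) (f k)))" unfolding g_def by simp
    then show ?thesis using lk unfolding f'_def by simp
  qed
  ultimately have "f (0 - k) = f k" by simp
  moreover have "0 < k - (0 - k)" "k - (0 - k) < n" using k n by auto
  ultimately show False using icirc_neq[OF ic] by blast
qed


lemma arc_mem: "k < m \<Longrightarrow> c (i + int k) \<in> set (arc c i m)"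
  unfolding arc_set by blast

lemma good_contra: "\<forall>m. dd v (f m) \<le> 2 \<Longrightarrow> 3 \<le> dd v (f x) \<Longrightarrow> False"
proof -
  assume a: "\<forall>m. dd v (f m) \<le> 2" and b: "3 \<le> dd v (f x)"
  have "dd v (f x) \<le> 2" using a by blast
  then show False using b by linarith
qed

lemma caseF_good:
  assumes ic: "icirc f n" and n: "n = 2 * L + 1" and L: "3 \<le> L"
    and lev: "\<forall>k. 0 \<le> k \<and> k < n \<longrightarrow> int (dd (f 0) (f k)) = min k (n - k)"
    and good: "\<forall>m. dd (f k) (f m) \<le> 2" and k: "0 \<le> k" "k < n"
  shows "L = 3 \<and> (k = 2 \<or> k = 5)"
proof -
  have V: "\<And>i. f i \<in> V" using icirc_V[OF ic] by auto
  define f' where "f' = (\<lambda>t. f (0 - t))"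
  have ic': "icirc f' n" unfolding f'_def using icirc_refl[OF ic] .
  have lev': "\<forall>k. 0 \<le> k \<and> k < n \<longrightarrow> int (dd (f' 0) (f' k)) = min k (n - k)"
    unfolding f'_def using lev_refl[OF ic lev] by simp
  have not0: "k \<noteq> 0"
  proof
    assume "k = 0"
    then have "dd (f 0) (f 3) \<le> 2" using good by simp
    moreover have "int (dd (f 0) (f 3)) = 3" using lev n L by auto
    ultimately show False by linarith
  qed
  have nmid: "\<not> (3 \<le> k \<and> k \<le> n - 3)"
  proof
    assume h: "3 \<le> k \<and> k \<le> n - 3"
    have "dd (f k) (f 0) \<le> 2" using good by simp
    then have "dd (f 0) (f k) \<le> 2" using d_sym[OF V V] by simp
    moreover have "int (dd (f 0) (f k)) = min k (n - k)" using lev h n L by auto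
    ultimately show False using h by linarith
  qed
  have not1: "k \<noteq> 1"
  proof
    assume "k = 1"
    then have "3 \<le> dd (f k) (f (n - 3))" using fbad[OF ic n L lev, of 1 "n - 3"] n L by simp
    then show False by (rule good_contra[OF good])
  qed
  have notn1: "k \<noteq> n - 1"
  proof
    assume kk: "k = n - 1"
    have "3 \<le> dd (f' 1) (f' (n - 3))" using fbad[OF ic' n L lev', of 1 "n - 3"] n L by simp
    moreover have "f' 1 = f k" unfolding f'_def using icirc_per[OF ic, of "0 - 1"] kk by simp
    moreover have "f' (n - 3) = f 3" unfolding f'_def using icirc_perm[OF ic, of 3] by simp
    ultimately have "3 \<le> dd (f k) (f 3)" by simp
    then show False by (rule good_contra[OF good])
  qed
  have L3: "L = 3"
  proof (rule ccontr)
    assume "L \<noteq> 3"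
    then have L4: "4 \<le> L" using L by simp
    have "k = 2 \<or> k = n - 2" using not0 not1 notn1 nmid k by linarith
    then show False
    proof
      assume "k = 2"
      then have "3 \<le> dd (f k) (f (n - 4))" using fbad[OF ic n L lev, of 2 "n - 4"] n L4 by simp
      then show False by (rule good_contra[OF good])
    next
      assume kk: "k = n - 2"
      have "3 \<le> dd (f' 2) (f' (n - 4))" using fbad[OF ic' n L lev', of 2 "n - 4"] n L4 by simp
      moreover have "f' 2 = f k" unfolding f'_def using icirc_per[OF ic, of "0 - 2"] kk by simp
      moreover have "f' (n - 4) = f 4" unfolding f'_def using icirc_perm[OF ic, of 4] by simp
      ultimately have "3 \<le> dd (f k) (f 4)" by simp
      then show False by (rule good_contra[OF good])
    qed
  qed
  then show ?thesis using not0 not1 notn1 nmid k n by linarith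
qed


lemma caseF7:
  assumes ic: "icirc f 7" and sm: "small 7"
    and lev: "\<forall>k. 0 \<le> k \<and> k < 7 \<longrightarrow> int (dd (f 0) (f k)) = min k (7 - k)"
    and g5: "dd (f 1) (f 5) \<le> 2"
  shows False
proof -
  have V: "\<And>i. f i \<in> V" using icirc_V[OF ic] by auto
  have l1: "dd (f 0) (f 1) = 1" using lev[rule_format, of 1] by simp
  have l2: "dd (f 0) (f 2) = 2" using lev[rule_format, of 2] by simp
  have l3: "dd (f 0) (f 3) = 3" using lev[rule_format, of 3] by simp
  have l4: "dd (f 0) (f 4) = 3" using lev[rule_format, of 4] by simp
  have l5: "dd (f 0) (f 5) = 2" using lev[rule_format, of 5] by simp
  have l6: "dd (f 0) (f 6) = 1" using lev[rule_format, of 6] by simp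
  have neq: "\<And>i j. 0 < j - i \<Longrightarrow> j - i < 7 \<Longrightarrow> f i \<noteq> f j" using icirc_neq[OF ic] by blast
  have E: "\<And>i. E (f i) (f (i + 1))" using icirc_E[OF ic] by blast
  have n16: "f 1 \<noteq> f 6" by (rule neq) simp_all
  have n15': "f 1 \<noteq> f 5" by (rule neq) simp_all
  have n25: "f 2 \<noteq> f 5" by (rule neq) simp_all
  have n24': "f 2 \<noteq> f 4" by (rule neq) simp_all
  have n35: "f 3 \<noteq> f 5" by (rule neq) simp_all
  have E65: "E (f 6) (f 5)" using icirc_E2[OF ic, of 5] by simp
  have E54: "E (f 5) (f 4)" using icirc_E2[OF ic, of 4] by simp
  have f14: "3 \<le> dd (f 1) (f 4)"
    using fbad[OF ic _ _ lev, of 3 1 4] by simp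
  have n15: "\<not> E (f 1) (f 5)"
  proof
    assume e: "E (f 1) (f 5)"
    have "f 1 = f 6" using parent_unique[OF V[of 0] e E65] l1 l5 l6 by simp
    then show False using n16 by simp
  qed
  have d15: "dd (f 1) (f 5) = 2"
  proof -
    have "dd (f 1) (f 5) \<noteq> 0" using d_zero[OF V V] n15' by auto
    moreover have "dd (f 1) (f 5) \<noteq> 1" using d_one[OF V V] n15 by auto
    ultimately show ?thesis using g5 by linarith
  qed
  obtain w where w: "E (f 1) w" "E w (f 5)" using mid_ex[OF V V d15] by blast
  have wV: "w \<in> V" using w E_V by auto
  have lw1: "dd (f 0) w \<le> 2" using lev_adj[OF V[of 0] w(1)] l1 by simp
  have lw2: "1 \<le> dd (f 0) w" using lev_adj[OF V[of 0] w(2)] l5 by simp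
  have small6: "lcirc xs \<Longrightarrow> length xs = 6 \<Longrightarrow> f 1 \<in> set xs \<Longrightarrow> f 4 \<in> set xs \<Longrightarrow> False" for xs
    using smallD[OF sm, of xs "f 1" "f 4"] f14 by simp
  show False
  proof (cases "dd (f 0) w = 1")
    case True
    have "w = f 6" using parent_unique[OF V[of 0] w(2) E65] True l5 l6 by simp
    then have e61: "E (f 6) (f 1)" using w(1) E_sym by simp
    define xs where "xs = arc f 1 6"
    have lc: "lcirc xs" unfolding lcirc_def xs_def
    proof (intro conjI)
      show "3 \<le> length (arc f 1 6)" by simp
      show "distinct (arc f 1 6)" using arc_distinct[OF ic] by simp
      have "walk E (arc f 1 6 @ [f 1])"
        using walk_append[of "arc f 1 6" "[f 1]" E] arc_walk[OF ic, of 6 1] arc_last[of 6 f 1] e61 by simp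
      then show "walk E (arc f 1 6 @ [hd (arc f 1 6)])" using arc_hd[of 6 f 1] by simp
    qed
    have m1: "f 1 \<in> set xs" unfolding xs_def arc_set by (rule exI[of _ 0]) simp
    have m4: "f 4 \<in> set xs" unfolding xs_def arc_set by (rule exI[of _ 3]) simp
    show False using small6[OF lc _ m1 m4] unfolding xs_def by simp
  next
    case False
    then have lw: "dd (f 0) w = 2" using lw1 lw2 by simp
    show False
    proof (cases "w = f 2")
      case True
      then have e25: "E (f 2) (f 5)" using w by simp
      have n24: "\<not> E (f 2) (f 4)"
      proof
        assume e: "E (f 2) (f 4)"
        have "f 2 = f 5" using parent_unique[OF V[of 0] e E54] l2 l4 l5 by simp
        then show False using n25 by simp
      qed
      have e23: "E (f 2) (f 3)" "E (f 3) (f 4)" using E[of 2] E[of 3] by simp_all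
      have "dd (f 2) (f 4) = 2" using d_two[OF e23 n24' n24] by simp
      then have "f 3 = f 5" using walk2_uniq[OF e23 e25 E54] by simp
      then show False using n35 by simp
    next
      case False
      define xs where "xs = arc f 1 5 @ [w]"
      have notin: "w \<notin> set (arc f 1 5)"
      proof
        assume "w \<in> set (arc f 1 5)"
        then obtain k where k: "k < 5" "w = f (1 + int k)" unfolding arc_set by blast
        have "k = 0 \<or> k = 1 \<or> k = 2 \<or> k = 3 \<or> k = 4" using k by auto
        then show False
        proof (elim disjE)
          assume "k = 0" then show False using k w(1) E_irr by simp
        next
          assume "k = 1" then show False using k False by simp
        next
          assume "k = 2" then show False using k lw l3 by simp
        next
          assume "k = 3" then show False using k lw l4 by simp
        next
          assume "k = 4" then show False using k w(2) E_irr by simp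
        qed
      qed
      have lc: "lcirc xs" unfolding lcirc_def xs_def
      proof (intro conjI)
        show "3 \<le> length (arc f 1 5 @ [w])" by simp
        show "distinct (arc f 1 5 @ [w])" using arc_distinct[OF ic, of 5 1] notin by simp
        have "walk E (arc f 1 5 @ [w, f 1])"
          using walk_append[of "arc f 1 5" "[w, f 1]" E] arc_walk[OF ic, of 5 1] arc_last[of 5 f 1]
            E_sym[OF w(1)] E_sym[OF w(2)] by simp
        then show "walk E ((arc f 1 5 @ [w]) @ [hd (arc f 1 5 @ [w])])" using arc_hd[of 5 f 1] by simp
      qed
      have m1: "f 1 \<in> set xs" using arc_mem[of 0 5 f 1] unfolding xs_def by simp
      have m4: "f 4 \<in> set xs" using arc_mem[of 3 5 f 1] unfolding xs_def by simp
      show False using small6[OF lc _ m1 m4] unfolding xs_def by simp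
    qed
  qed
qed

lemma caseF:
  assumes ic: "icirc f n" and sm: "small n" and h5: "\<forall>u m. isometric_circuit E u m \<longrightarrow> m \<le> 5"
    and n: "n = 2 * L + 1" and L: "3 \<le> L"
    and lev: "\<forall>k. 0 \<le> k \<and> k < n \<longrightarrow> int (dd (f 0) (f k)) = min k (n - k)"
  shows False
proof -
  from lgood[OF ic sm] show False
  proof
    assume iso: "\<forall>i a. 0 < a \<and> a < n \<longrightarrow> int (dd (f i) (f (i + a))) = min a (n - a)"
    have "nat n \<le> 5" using h5 iso_h5[OF ic iso] by blast
    then show False using n L by linarith
  next
    assume "\<exists>p q. f p \<noteq> f q \<and> (\<forall>k. dd (f p) (f k) \<le> 2) \<and> (\<forall>k. dd (f q) (f k) \<le> 2)"
    then obtain p q where pq: "f p \<noteq> f q" "\<forall>k. dd (f p) (f k) \<le> 2" "\<forall>k. dd (f q) (f k) \<le> 2" by blast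
    define p' where "p' = p mod n"
    define q' where "q' = q mod n"
    have n3: "3 \<le> n" using icirc_n[OF ic] .
    have fp: "f p' = f p" "f q' = f q" unfolding p'_def q'_def using icirc_mod[OF ic] by auto
    have r: "0 \<le> p'" "p' < n" "0 \<le> q'" "q' < n" unfolding p'_def q'_def using n3 by auto
    have gp: "L = 3 \<and> (p' = 2 \<or> p' = 5)" using caseF_good[OF ic n L lev _ r(1,2)] pq(2) fp by simp
    have gq: "L = 3 \<and> (q' = 2 \<or> q' = 5)" using caseF_good[OF ic n L lev _ r(3,4)] pq(3) fp by simp
    have "p' \<noteq> q'" using pq(1) fp by auto
    then have "(\<forall>k. dd (f 5) (f k) \<le> 2)" using gp gq pq fp by auto
    then have g5: "dd (f 5) (f 1) \<le> 2" by blast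
    have n7: "n = 7" using gp n by simp
    have "dd (f 1) (f 5) \<le> 2" using g5 d_sym[OF icirc_V[OF ic] icirc_V[OF ic]] by metis
    then show False using caseF7[of f] ic sm lev n7 by simp
  qed
qed

end



context geo begin

lemma plem:
  assumes ic: "icirc e n" and sm: "small n" and k3: "3 \<le> dd (e 0) (e k)"
  shows "dd (e 0) (e (k - 1)) + 1 = dd (e 0) (e k) \<or> dd (e 0) (e (k + 1)) + 1 = dd (e 0) (e k)"
proof -
  have V: "\<And>i. e i \<in> V" using icirc_V[OF ic] by auto
  have ne: "e k \<noteq> e 0" using k3 by auto
  obtain w where w: "E w (e k)" "dd (e 0) w + 1 = dd (e 0) (e k)" using parent_ex[OF V V ne] by blast
  have bad: "3 \<le> dd (e k) (e 0)" using k3 d_sym[OF V V] by metis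
  have "w = e (k - 1) \<or> w = e (k + 1)" using lpen[OF ic sm bad ne[symmetric] w(1) w(2)] .
  then show ?thesis using w(2) by auto
qed

lemma chain_lem:
  assumes ic: "icirc e n" and sm: "small n"
    and maxl: "\<And>k. dd (e 0) (e k) \<le> L" and za: "dd (e 0) (e a) = L" and L3: "3 \<le> L"
    and par: "dd (e 0) (e (a - 1)) + 1 = L"
  shows "\<forall>j. j \<le> k \<longrightarrow> k \<le> L - 2 \<longrightarrow> dd (e 0) (e (a - int j)) = L - j \<and> dd (e 0) (e (a + 1 + int j)) = L - j"
proof -
  define lev where "lev = (\<lambda>k. dd (e 0) (e k))"
  have V: "\<And>i. e i \<in> V" using icirc_V[OF ic] by auto
  have neq: "\<And>i j. 0 < j - i \<Longrightarrow> j - i < n \<Longrightarrow> e i \<noteq> e j" using icirc_neq[OF ic] by blast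
  have n3: "3 \<le> n" using icirc_n[OF ic] .
  have adj1: "\<And>k. lev k \<le> lev (k + 1) + 1" unfolding lev_def using lev_adj[OF V icirc_E2[OF ic]] by blast
  have ha1: "lev (a + 1) = L"
  proof -
    have "L \<le> lev (a + 1) + 1" using adj1[of a] za unfolding lev_def by simp
    moreover have "lev (a + 1) \<le> L" using maxl unfolding lev_def by simp
    moreover have "lev (a + 1) \<noteq> L - 1"
    proof
      assume h: "lev (a + 1) = L - 1"
      have e1: "E (e (a - 1)) (e a)" using icirc_Ep[OF ic] .
      have e2: "E (e (a + 1)) (e a)" using icirc_E2[OF ic] .
      have "e (a - 1) = e (a + 1)"
        using parent_unique[OF V[of 0] e1 e2] par h za L3 unfolding lev_def by simp
      moreover have "e (a - 1) \<noteq> e (a + 1)" by (rule neq) (use n3 in simp_all)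
      ultimately show False by simp
    qed
    ultimately show ?thesis by linarith
  qed
  show ?thesis
  proof (induction k)
    case 0
    then show ?case using za ha1 unfolding lev_def by simp
  next
    case (Suc k)
    show ?case
    proof (intro allI impI)
      fix j assume j: "j \<le> Suc k" and kL: "Suc k \<le> L - 2"
      show "dd (e 0) (e (a - int j)) = L - j \<and> dd (e 0) (e (a + 1 + int j)) = L - j"
      proof (cases "j \<le> k")
        case True
        then show ?thesis using Suc.IH kL by simp
      next
        case False
        then have jk: "j = Suc k" using j by simp
        have IH: "\<And>i. i \<le> k \<Longrightarrow> lev (a - int i) = L - i \<and> lev (a + 1 + int i) = L - i"
          using Suc.IH kL unfolding lev_def by simp
        have lx: "lev (a - int k) = L - k" using IH[of k] by simp
        have lx1: "lev (a - int k + 1) \<noteq> L - Suc k"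
        proof (cases k)
          case 0 then show ?thesis using ha1 L3 by simp
        next
          case (Suc k')
          have eq: "a - int k + 1 = a - int k'" using Suc by simp
          have "lev (a - int k + 1) = L - k'" unfolding eq using IH[of k'] Suc by simp
          then show ?thesis using kL Suc by simp
        qed
        have "3 \<le> lev (a - int k)" using lx kL by simp
        then have "lev (a - int k - 1) + 1 = lev (a - int k) \<or> lev (a - int k + 1) + 1 = lev (a - int k)"
          using plem[OF ic sm] unfolding lev_def by blast
        then have left: "lev (a - int (Suc k)) = L - Suc k" using lx lx1 kL by (auto simp: algebra_simps)
        have ry: "lev (a + 1 + int k) = L - k" using IH[of k] by simp
        have ry1: "lev (a + 1 + int k - 1) \<noteq> L - Suc k"
        proof (cases k)
          case 0 then show ?thesis using za L3 unfolding lev_def by simp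
        next
          case (Suc k')
          have eq: "a + 1 + int k - 1 = a + 1 + int k'" using Suc by simp
          have "lev (a + 1 + int k - 1) = L - k'" unfolding eq using IH[of k'] Suc by simp
          then show ?thesis using kL Suc by simp
        qed
        have "3 \<le> lev (a + 1 + int k)" using ry kL by simp
        then have "lev (a + 1 + int k - 1) + 1 = lev (a + 1 + int k) \<or> lev (a + 1 + int k + 1) + 1 = lev (a + 1 + int k)"
          using plem[OF ic sm] unfolding lev_def by blast
        then have right: "lev (a + 1 + int (Suc k)) = L - Suc k" using ry ry1 kL by (auto simp: algebra_simps)
        show ?thesis using left right jk unfolding lev_def by simp
      qed
    qed
  qed
qed


lemma mult_ex: "3 \<le> (n::int) \<Longrightarrow> \<exists>y. x0 \<le> y \<and> y < x0 + n \<and> y mod n = 0"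
proof -
  assume n: "3 \<le> n"
  then have n0: "0 < n" by simp
  have b: "0 \<le> (- x0) mod n \<and> (- x0) mod n < n" using n0 by simp
  have m: "(x0 + (- x0) mod n) mod n = 0" by (simp add: mod_add_right_eq)
  have c: "x0 \<le> x0 + (- x0) mod n \<and> x0 + (- x0) mod n < x0 + n" using b by simp
  show ?thesis
    apply (rule exI[of _ "x0 + (- x0) mod n"])
    using c m by (simp only: conj_assoc) 
qed

lemma top_struct:
  assumes ic: "icirc e n" and sm: "small n" and h5: "\<forall>u m. isometric_circuit E u m \<longrightarrow> m \<le> 5"
    and maxl: "\<And>k. dd (e 0) (e k) \<le> L" and za: "dd (e 0) (e a) = L" and L3: "3 \<le> L"
    and par: "dd (e 0) (e (a - 1)) + 1 = L"
  shows "L = 3 \<and> (\<exists>s. (s = 1 \<or> s = -1) \<and> E (e s) (e (5*s)) \<and> dd (e 0) (e (2*s)) = 2 \<and>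
          dd (e 0) (e (3*s)) = 3 \<and> dd (e 0) (e (4*s)) = 3 \<and> dd (e 0) (e (5*s)) = 2 \<and>
          (e a = e (3*s) \<or> e a = e (4*s)))"
proof -
  define lev where "lev = (\<lambda>k. dd (e 0) (e k))"
  have V: "\<And>i. e i \<in> V" using icirc_V[OF ic] by auto
  have neq: "\<And>i j. 0 < j - i \<Longrightarrow> j - i < n \<Longrightarrow> e i \<noteq> e j" using icirc_neq[OF ic] by blast
  have n3: "3 \<le> n" using icirc_n[OF ic] .
  have ch: "\<And>j. j \<le> L - 2 \<Longrightarrow> lev (a - int j) = L - j \<and> lev (a + 1 + int j) = L - j"
    using chain_lem[OF ic sm maxl za L3 par, of "L - 2"] unfolding lev_def by blast
  have adjA: "\<And>k. lev (k + 1) \<le> lev k + 1" unfolding lev_def using lev_adj[OF V icirc_E[OF ic]] by blast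
  have adjB: "\<And>k. lev k \<le> lev (k + 1) + 1" unfolding lev_def using lev_adj[OF V icirc_E2[OF ic]] by blast
  have zero: "\<And>y. y mod n = 0 \<Longrightarrow> lev y = 0"
  proof -
    fix y assume "y mod n = 0"
    then have "e y = e 0" using icirc_eq[OF ic] by simp
    then show "lev y = 0" unfolding lev_def by simp
  qed
  have lev0: "\<And>x. e x = e 0 \<Longrightarrow> lev x = 0" unfolding lev_def by simp
  define Li where "Li = int L"
  have Li3: "3 \<le> Li" unfolding Li_def using L3 by simp
  have win: "\<And>x. a - (Li - 2) \<le> x \<Longrightarrow> x \<le> a + Li - 1 \<Longrightarrow> 2 \<le> lev x"
  proof -
    fix x assume x: "a - (Li - 2) \<le> x" "x \<le> a + Li - 1"
    show "2 \<le> lev x"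
    proof (cases "x \<le> a")
      case True
      define j where "j = nat (a - x)"
      have j: "j \<le> L - 2" "a - int j = x" unfolding j_def using True x Li_def by auto
      then show ?thesis using ch[of j] L3 by auto
    next
      case False
      define j where "j = nat (x - a - 1)"
      have j: "j \<le> L - 2" "a + 1 + int j = x" unfolding j_def using False x Li_def by auto
      then show ?thesis using ch[of j] L3 by auto
    qed
  qed
  have endL: "1 \<le> lev (a - Li + 1)"
  proof -
    have "2 \<le> lev (a - Li + 1 + 1)" using win Li3 by simp
    then show ?thesis using adjA[of "a - Li + 1"] by simp
  qed
  have endR: "1 \<le> lev (a + Li)"
  proof -
    have "2 \<le> lev (a + Li - 1)" using win Li3 by simp
    moreover have "lev (a + Li - 1) \<le> lev (a + Li) + 1" using adjB[of "a + Li - 1"] by simp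
    ultimately show ?thesis by simp
  qed
  have ge1: "\<And>x. a - Li + 1 \<le> x \<Longrightarrow> x \<le> a + Li \<Longrightarrow> 1 \<le> lev x"
  proof -
    fix x assume x: "a - Li + 1 \<le> x" "x \<le> a + Li"
    show "1 \<le> lev x"
    proof (cases "x = a - Li + 1")
      case True then show ?thesis using endL by simp
    next
      case False
      show ?thesis
      proof (cases "x = a + Li")
        case True then show ?thesis using endR by simp
      next
        case False2: False
        then have "2 \<le> lev x" using win x False by simp
        then show ?thesis by simp
      qed
    qed
  qed
  have nbig: "2 * Li + 1 \<le> n"
  proof (rule ccontr)
    assume "\<not> 2 * Li + 1 \<le> n"
    have "\<exists>y. a - Li + 1 \<le> y \<and> y < a - Li + 1 + n \<and> y mod n = 0" by (rule mult_ex[OF n3])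
    then obtain y where y0: "a - Li + 1 \<le> y \<and> y < a - Li + 1 + n \<and> y mod n = 0" ..
    have y: "a - Li + 1 \<le> y" "y < a - Li + 1 + n" "y mod n = 0" using y0 by auto
    have "1 \<le> lev y" using ge1 y \<open>\<not> 2 * Li + 1 \<le> n\<close> by simp
    then show False using zero[OF y(3)] by simp
  qed
  define m where "m = e (a - (Li - 2))"
  define m' where "m' = e (a + Li - 1)"
  have lm: "lev (a - (Li - 2)) = 2"
  proof -
    have "a - int (L - 2) = a - (Li - 2)" unfolding Li_def using L3 by simp
    then show ?thesis using ch[of "L - 2"] L3 by simp
  qed
  have lm': "lev (a + Li - 1) = 2"
  proof -
    have "a + 1 + int (L - 2) = a + Li - 1" unfolding Li_def using L3 by simp
    then show ?thesis using ch[of "L - 2"] L3 by simp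
  qed
  have mne: "m \<noteq> e 0" "m' \<noteq> e 0" using lm lm' lev0 unfolding m_def m'_def by auto
  have mV: "m \<in> V" "m' \<in> V" unfolding m_def m'_def using V by auto
  obtain g where g: "E g m" "dd (e 0) g + 1 = dd (e 0) m" using parent_ex[OF V[of 0] mV(1) mne(1)] by blast
  obtain g' where g': "E g' m'" "dd (e 0) g' + 1 = dd (e 0) m'" using parent_ex[OF V[of 0] mV(2) mne(2)] by blast
  have lg: "dd (e 0) g = 1" "dd (e 0) g' = 1" using g(2) g'(2) lm lm' unfolding lev_def m_def m'_def by auto
  have gV: "g \<in> V" "g' \<in> V" using g g' E_V by auto
  have Eg: "E (e 0) g" "E (e 0) g'" using d_one[OF V[of 0] gV(1) lg(1)] d_one[OF V[of 0] gV(2) lg(2)] by auto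
  define W where "W = arc e (a - (Li - 2)) (2 * L - 2)"
  have lenW: "length W = 2 * L - 2" unfolding W_def by simp
  have WL: "int (2 * L - 2) = 2 * Li - 2" unfolding Li_def using L3 by simp
  have Wset: "\<And>x. x \<in> set W \<Longrightarrow> 2 \<le> dd (e 0) x"
  proof -
    fix x assume "x \<in> set W"
    then obtain k where k: "k < 2 * L - 2" "x = e (a - (Li - 2) + int k)" unfolding W_def arc_set by blast
    have "2 \<le> lev (a - (Li - 2) + int k)" using k WL by (intro win) auto
    then show "2 \<le> dd (e 0) x" using k unfolding lev_def by simp
  qed
  have Wd: "distinct W" unfolding W_def using arc_distinct[OF ic] WL nbig by simp
  have Wne: "W \<noteq> []" using lenW L3 by auto
  have Ww: "walk E W" unfolding W_def using arc_walk[OF ic] L3 by simp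
  have Wh: "hd W = m" unfolding W_def m_def using arc_hd L3 by simp
  have Wl: "last W = m'"
  proof -
    have "last W = e (a - (Li - 2) + int (2 * L - 2) - 1)" unfolding W_def using arc_last L3 by simp
    also have "a - (Li - 2) + int (2 * L - 2) - 1 = a + Li - 1" using WL by simp
    finally show ?thesis unfolding m'_def .
  qed
  have Wa: "e a \<in> set W"
  proof -
    have "e (a - (Li - 2) + int (L - 2)) \<in> set W" unfolding W_def using L3 by (intro arc_mem) simp
    moreover have "a - (Li - 2) + int (L - 2) = a" unfolding Li_def using L3 by simp
    ultimately show ?thesis by simp
  qed
  have gW: "g \<notin> set W" "g' \<notin> set W" using Wset lg by fastforce+
  have e0W: "e 0 \<notin> set W" using Wset by fastforce
  have e0g: "e 0 \<noteq> g" "e 0 \<noteq> g'" using lg by auto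
  have notA: "g = g' \<Longrightarrow> 4 \<le> L \<Longrightarrow> False"
  proof -
    assume gg: "g = g'" and L4: "4 \<le> L"
    define xs where "xs = g # W"
    have w1: "walk E (W @ [g])" using walk_append[OF Wne, of "[g]" E] Ww Wl E_sym[OF g'(1)] gg by simp
    have lc: "lcirc xs" unfolding lcirc_def xs_def
    proof (intro conjI)
      show "3 \<le> length (g # W)" using lenW L3 by simp
      show "distinct (g # W)" using Wd gW by simp
      have "walk E ([g] @ (W @ [g]))" using walk_append[of "[g]" "W @ [g]" E] w1 g(1) Wh Wne by simp
      then show "walk E ((g # W) @ [hd (g # W)])" by simp
    qed
    have "int (length xs) < n" unfolding xs_def using lenW nbig WL L3 by simp
    then have "dd g (e a) \<le> 2" using smallD[OF sm lc] Wa unfolding xs_def by simp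
    moreover have "dd (e 0) (e a) \<le> dd (e 0) g + dd g (e a)" using d_tri[OF V[of 0] gV(1) V[of a]] .
    ultimately show False using za lg L4 by simp
  qed
  have notB: "g \<noteq> g' \<Longrightarrow> False"
  proof -
    assume gg: "g \<noteq> g'"
    define xs where "xs = e 0 # g # W @ [g']"
    have w1: "walk E (W @ [g', e 0])"
      using walk_append[OF Wne, of "[g', e 0]" E] Ww Wl E_sym[OF g'(1)] E_sym[OF Eg(2)] by simp
    have w2: "walk E (g # W @ [g', e 0])" using walk_append[of "[g]" "W @ [g', e 0]" E] w1 g(1) Wh Wne by simp
    have w3: "walk E (e 0 # g # W @ [g', e 0])" using w2 Eg(1) by simp
    have lc: "lcirc xs" unfolding lcirc_def xs_def
    proof (intro conjI)
      show "3 \<le> length (e 0 # g # W @ [g'])" by simp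
      show "distinct (e 0 # g # W @ [g'])" using Wd gW e0W e0g gg by auto
      show "walk E ((e 0 # g # W @ [g']) @ [hd (e 0 # g # W @ [g'])])" using w3 by simp
    qed
    have lenx: "int (length xs) = 2 * Li + 1" unfolding xs_def using lenW WL by simp
    have nn: "n = 2 * Li + 1"
    proof (rule ccontr)
      assume "n \<noteq> 2 * Li + 1"
      then have "int (length xs) < n" using nbig lenx by simp
      then have "dd (e 0) (e a) \<le> 2" using smallD[OF sm lc] Wa unfolding xs_def by simp
      then show False using za L3 by simp
    qed
    have "\<exists>y. a - Li + 1 \<le> y \<and> y < a - Li + 1 + n \<and> y mod n = 0" by (rule mult_ex[OF n3])
    then obtain y where y0: "a - Li + 1 \<le> y \<and> y < a - Li + 1 + n \<and> y mod n = 0" ..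
    have y: "a - Li + 1 \<le> y" "y < a - Li + 1 + n" "y mod n = 0" using y0 by auto
    have ya: "y = a + Li + 1"
    proof (rule ccontr)
      assume "y \<noteq> a + Li + 1"
      then have "y \<le> a + Li" using y nn by simp
      then have "1 \<le> lev y" using ge1 y by simp
      then show False using zero[OF y(3)] by simp
    qed
    define f where "f = (\<lambda>k. e ((a + Li + 1) + k))"
    have icf: "icirc f n" unfolding f_def using icirc_rot[OF ic] .
    have f0: "f 0 = e 0" unfolding f_def using icirc_eq[OF ic] y ya by simp
    have levf: "\<forall>k. 0 \<le> k \<and> k < n \<longrightarrow> int (dd (f 0) (f k)) = min k (n - k)"
    proof (intro allI impI)
      fix k assume k: "0 \<le> k \<and> k < n"
      have fk: "f k = e (a - Li + k)" unfolding f_def using icirc_perm[OF ic, of "a + Li + 1 + k"] nn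
        by (simp add: algebra_simps)
      have d: "dd (f 0) (f k) = lev (a - Li + k)" unfolding lev_def using f0 fk by simp
      have adj0: "lev (a + Li + 2) \<le> 1"
      proof -
        have "lev (a + Li + 1) = 0" using lev0 f0 unfolding f_def by simp
        then show ?thesis using adjA[of "a + Li + 1"] by (simp add: add.assoc)
      qed
      show "int (dd (f 0) (f k)) = min k (n - k)"
      proof (cases "k = 0")
        case True then show ?thesis using n3 by simp
      next
        case k0: False
        show ?thesis
        proof (cases "k = 1")
          case True
          have "lev (a - Li + 1) = lev (a + Li + 2)"
            unfolding lev_def using icirc_perm[OF ic, of "a + Li + 2"] nn by (simp add: algebra_simps)
          then have "lev (a - Li + 1) = 1" using adj0 endL by simp
          then show ?thesis using d True n3 by simp
        next
          case k1: False
          show ?thesis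
          proof (cases "k \<le> Li")
            case True
            define j where "j = L - nat k"
            have kL: "nat k \<le> L" "2 \<le> nat k" using True k k0 k1 unfolding Li_def by auto
            have ij: "int j = Li - k" unfolding j_def Li_def using kL k by (simp add: of_nat_diff)
            have j: "j \<le> L - 2" "a - int j = a - Li + k" using kL ij unfolding j_def by auto
            have "lev (a - Li + k) = L - j" using ch[OF j(1)] j(2) by simp
            moreover have "int (L - j) = k" unfolding j_def using kL k by (simp add: of_nat_diff)
            ultimately show ?thesis using d True nn by simp
          next
            case False
            show ?thesis
            proof (cases "k = 2 * Li")
              case True
              have "lev (a + Li) \<le> 1"
              proof -
                have "lev (a + Li) \<le> lev (a + Li + 1) + 1" using adjB[of "a + Li"] by simp
                moreover have "lev (a + Li + 1) = 0" using lev0 f0 unfolding f_def by simp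
                ultimately show ?thesis by simp
              qed
              then have l1: "lev (a + Li) = 1" using endR by simp
              have "a - Li + k = a + Li" using True by simp
              then have "lev (a - Li + k) = 1" using l1 by (simp only:)
              then have "int (dd (f 0) (f k)) = 1" using d by simp
              moreover have "min k (n - k) = 1" using True nn Li3 by simp
              ultimately show ?thesis by simp
            next
              case False2: False
              define j where "j = nat (k - Li - 1)"
              have j: "j \<le> L - 2" "a + 1 + int j = a - Li + k"
                unfolding j_def Li_def using False False2 k nn Li_def by auto
              have "lev (a - Li + k) = L - j" using ch[OF j(1)] j(2) by simp
              moreover have "int (L - j) = n - k" unfolding j_def using False False2 k nn Li_def by auto
              ultimately show ?thesis using d False nn by simp
            qed
          qed
        qed
      qed
    qed
    show False using caseF[OF icf sm h5 nn Li3 levf] .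
  qed
  have gg: "g = g'" using notB by blast
  have L3e: "L = 3"
  proof (rule ccontr)
    assume "L \<noteq> 3"
    then have "4 \<le> L" using L3 by simp
    then show False using notA[OF gg] by blast
  qed
  have Li3e: "Li = 3" unfolding Li_def using L3e by simp
  have lv: "lev (a - 1) = 2" "lev a = 3" "lev (a + 1) = 3" "lev (a + 2) = 2"
  proof -
    show "lev (a - 1) = 2" using lm Li3e by simp
    show "lev a = 3" using za L3e unfolding lev_def by simp
    show "lev (a + 1) = 3" using ch[of 0] L3e by simp
    show "lev (a + 2) = 2" using lm' Li3e by (simp add: add.commute)
  qed
  have Ega: "E g (e (a - 1))" "E g (e (a + 2))" using g(1) g'(1) gg Li3e unfolding m_def m'_def
    by (simp_all add: add.commute)
  have lpen_g: "g = e (0 - 1) \<or> g = e (0 + 1)"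
  proof (rule lpen[OF ic sm _ _ E_sym[OF Eg(1)]])
    show "3 \<le> dd (e 0) (e a)" using za L3 by simp
    show "e a \<noteq> e 0" using lv lev0 by auto
    have s1: "dd (e a) (e 0) = 3" using lv d_sym[OF V V] unfolding lev_def by metis
    have "dd (e a) g \<le> 2"
      using gdist_le[of E "[e a, e (a - 1), g]" "e a" g] icirc_Em[OF ic, of a] E_sym[OF Ega(1)] by simp
    moreover have "dd (e 0) (e a) \<le> dd (e 0) g + dd g (e a)" using d_tri[OF V[of 0] gV(1) V[of a]] .
    moreover have "dd g (e a) = dd (e a) g" using d_sym[OF gV(1) V] .
    ultimately have "dd (e a) g = 2" using lg lv unfolding lev_def by simp
    then show "dd (e a) g + 1 = dd (e a) (e 0)" using s1 by simp
  qed
  define s where "s = (if g = e 1 then (1::int) else -1)"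
  have s: "s = 1 \<or> s = -1" unfolding s_def by simp
  have gs: "g = e s" using lpen_g unfolding s_def by auto
  define f where "f = (\<lambda>k. e (0 + s * k))"
  have icf: "icirc f n" unfolding f_def using icirc_orient[OF ic s] .
  have f0: "f 0 = e 0" unfolding f_def by simp
  have f1: "f 1 = g" unfolding f_def using gs by simp
  define b where "b = (if s = 1 then a - 1 else - (a + 2))"
  have blk: "f b \<in> {e (a - 1), e (a + 2)} \<and> f (b + 3) \<in> {e (a - 1), e (a + 2)} \<and>
             lev (s * (b + 1)) = 3 \<and> lev (s * (b + 2)) = 3 \<and> (e a = f (b + 1) \<or> e a = f (b + 2))"
  proof (cases "s = 1")
    case True then show ?thesis unfolding f_def b_def using lv by (simp add: algebra_simps)
  next
    case False
    then have sm1: "s = -1" using s by simp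
    have "- (a + 2) + 1 = - (a + 1)" "- (a + 2) + 2 = - a" "- (a + 2) + 3 = - (a - 1)" by simp_all
    then show ?thesis unfolding f_def b_def using lv sm1 by (simp add: algebra_simps)
  qed
  have levf: "\<And>x. dd (f 0) (f x) = lev (s * x)" unfolding f_def lev_def by simp
  define b' where "b' = b mod n"
  have b'0: "0 \<le> b'" "b' < n" unfolding b'_def using n3 by auto
  have fb': "\<And>j. f (b' + j) = f (b + j)" unfolding b'_def using icirc_eq[OF icf] by (simp add: mod_add_left_eq)
  have lb: "dd (f 0) (f b') = 2" "dd (f 0) (f (b' + 1)) = 3" "dd (f 0) (f (b' + 2)) = 3" "dd (f 0) (f (b' + 3)) = 2"
  proof -
    have "f b' = f b" using fb'[of 0] by simp
    then show "dd (f 0) (f b') = 2" using blk lv f0 unfolding lev_def by auto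
    show "dd (f 0) (f (b' + 1)) = 3" using fb'[of 1] blk levf by simp
    show "dd (f 0) (f (b' + 2)) = 3" using fb'[of 2] blk levf by simp
    show "dd (f 0) (f (b' + 3)) = 2" using fb'[of 3] blk lv f0 unfolding lev_def by auto
  qed
  have Ef: "E (f 1) (f b')" "E (f 1) (f (b' + 3))" using fb'[of 0] fb'[of 3] blk Ega f1 by auto
  have fn: "f n = f 0" using icirc_per[OF icf, of 0] by simp
  have lf1: "dd (f 0) (f 1) = 1" using f1 lg f0 by simp
  have b'2: "2 \<le> b'"
  proof -
    have "b' \<noteq> 0" using lb(1) f0 by (auto simp: gdist_refl)
    moreover have "b' \<noteq> 1" using lb(1) lf1 by auto
    ultimately show ?thesis using b'0 by simp
  qed
  have b'n: "b' + 3 \<le> n - 1"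
  proof (rule ccontr)
    assume "\<not> b' + 3 \<le> n - 1"
    then have "b' + 1 = n \<or> b' + 2 = n \<or> b' + 3 = n" using b'0 by linarith
    then show False using lb fn by (auto simp: gdist_refl)
  qed
  have b'e: "b' = 2"
  proof (rule ccontr)
    assume "b' \<noteq> 2"
    then have b3: "3 \<le> b'" using b'2 by simp
    have "dd (f (1 + b')) (f (1 + (n - 1))) \<le> 2"
    proof (rule theta2[OF icf sm, of "b' - 1" "[f 1, f b']" 1])
      show "2 \<le> b' - 1" using b3 by simp
      show "b' - 1 \<le> n - 2" using b'n by simp
      show "walk E [f 1, f b']" using Ef by simp
      show "hd [f 1, f b'] = f 1" by simp
      show "last [f 1, f b'] = f (1 + (b' - 1))" by simp
      show "distinct [f 1, f b']" using Ef(1) E_irr by auto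
      show "\<forall>t. 0 < t \<and> t < length [f 1, f b'] - 1 \<longrightarrow> [f 1, f b'] ! t \<notin> range f" by auto
      show "int (length [f 1, f b']) - 1 < b' - 1" using b3 by simp
      show "int (length [f 1, f b']) - 1 < n - (b' - 1)" using b'n by simp
      show "b' - 1 \<le> b'" "b' \<le> n" "b' - 1 \<le> n - 1" "n - 1 \<le> n" using b'0 b3 by auto
    qed
    moreover have "f (1 + (n - 1)) = f 0" using fn by simp
    moreover have "dd (f (b' + 1)) (f 0) = 3" using lb(2) d_sym[OF icirc_V[OF icf] icirc_V[OF icf]] by metis
    ultimately show False by (simp add: add.commute)
  qed
  have res1: "E (e s) (e (5 * s))" using Ef(2) b'e f1 gs unfolding f_def by (simp add: mult.commute)
  have res2: "dd (e 0) (e (2 * s)) = 2" "dd (e 0) (e (3 * s)) = 3" "dd (e 0) (e (4 * s)) = 3" "dd (e 0) (e (5 * s)) = 2"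
    using lb b'e f0 unfolding f_def by (simp_all add: mult.commute)
  have res3: "e a = e (3 * s) \<or> e a = e (4 * s)"
  proof -
    have "e a = f (b' + 1) \<or> e a = f (b' + 2)" using blk fb'[of 1] fb'[of 2] by simp
    then show ?thesis using b'e unfolding f_def by (simp add: mult.commute)
  qed
  show ?thesis using L3e s res1 res2 res3 by blast
qed

end



context geo begin

lemma top_any:
  assumes ic: "icirc c n" and sm: "small n" and h5: "\<forall>u m. isometric_circuit E u m \<longrightarrow> m \<le> 5"
    and maxl: "\<And>k. dd (c 0) (c k) \<le> L" and zq: "dd (c 0) (c q) = L" and L3: "3 \<le> L"
  shows "L = 3 \<and> (\<exists>s. (s = 1 \<or> s = -1) \<and> E (c s) (c (5*s)) \<and> dd (c 0) (c (2*s)) = 2 \<and>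
          dd (c 0) (c (3*s)) = 3 \<and> dd (c 0) (c (4*s)) = 3 \<and> dd (c 0) (c (5*s)) = 2 \<and>
          (c q = c (3*s) \<or> c q = c (4*s)))"
proof -
  have pl: "dd (c 0) (c (q - 1)) + 1 = L \<or> dd (c 0) (c (q + 1)) + 1 = L"
    using plem[OF ic sm, of q] zq L3 by simp
  define s0 where "s0 = (if dd (c 0) (c (q - 1)) + 1 = L then (1::int) else -1)"
  have s0: "s0 = 1 \<or> s0 = -1" unfolding s0_def by simp
  have ss: "s0 * s0 = 1" using s0 by auto
  define e where "e = (\<lambda>k. c (0 + s0 * k))"
  have ice: "icirc e n" unfolding e_def using icirc_orient[OF ic s0] .
  define a where "a = s0 * q"
  have ea: "e a = c q" unfolding e_def a_def using ss by (simp add: mult.assoc[symmetric])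
  have ea1: "dd (e 0) (e (a - 1)) + 1 = L"
  proof (cases "s0 = 1")
    case True
    then have "dd (c 0) (c (q - 1)) + 1 = L" using pl unfolding s0_def by (auto split: if_splits)
    then show ?thesis unfolding e_def a_def using True by simp
  next
    case False
    then have s0m: "s0 = -1" using s0 by simp
    then have "dd (c 0) (c (q + 1)) + 1 = L" using pl unfolding s0_def by (auto split: if_splits)
    moreover have "e (a - 1) = c (q + 1)" unfolding e_def a_def using s0m by (simp add: add.commute)
    ultimately show ?thesis unfolding e_def by simp
  qed
  have maxe: "\<And>k. dd (e 0) (e k) \<le> L" unfolding e_def using maxl by simp
  have za: "dd (e 0) (e a) = L" using ea zq unfolding e_def by simp
  from top_struct[OF ice sm h5 maxe za L3 ea1]
  obtain s where L3e: "L = 3" and s: "s = 1 \<or> s = -1" and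
    r: "E (e s) (e (5*s))" "dd (e 0) (e (2*s)) = 2" "dd (e 0) (e (3*s)) = 3" "dd (e 0) (e (4*s)) = 3"
       "dd (e 0) (e (5*s)) = 2" "e a = e (3*s) \<or> e a = e (4*s)" by blast
  define s' where "s' = s0 * s"
  have s': "s' = 1 \<or> s' = -1" unfolding s'_def using s0 s by auto
  have tr: "\<And>j. e (j * s) = c (j * s')" unfolding e_def s'_def by (simp add: algebra_simps)
  have e0: "e 0 = c 0" unfolding e_def by simp
  have "E (c s') (c (5 * s'))" using r(1) tr[of 1] tr[of 5] by simp
  moreover have "dd (c 0) (c (2*s')) = 2" "dd (c 0) (c (3*s')) = 3" "dd (c 0) (c (4*s')) = 3" "dd (c 0) (c (5*s')) = 2"
    using r(2-5) tr e0 by simp_all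
  moreover have "c q = c (3*s') \<or> c q = c (4*s')" using r(6) tr ea by simp
  ultimately show ?thesis using L3e s' by blast
qed

lemma ml0:
  assumes ic: "icirc c n" and sm: "small n" and h5: "\<forall>u m. isometric_circuit E u m \<longrightarrow> m \<le> 5"
    and z: "3 \<le> dd (c 0) (c z)"
  shows "\<exists>s. (s = 1 \<or> s = -1) \<and> E (c s) (c (5*s)) \<and> dd (c 0) (c (2*s)) = 2 \<and>
          dd (c 0) (c (3*s)) = 3 \<and> dd (c 0) (c (4*s)) = 3 \<and> dd (c 0) (c (5*s)) = 2 \<and>
          (c z = c (3*s) \<or> c z = c (4*s))"
proof -
  have n3: "3 \<le> n" using icirc_n[OF ic] .
  define S where "S = (\<lambda>k. dd (c 0) (c k)) ` {0..<n}"
  have fin: "finite S" unfolding S_def by simp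
  have ne: "S \<noteq> {}" unfolding S_def using n3 by auto
  define L where "L = Max S"
  have maxl: "\<And>k. dd (c 0) (c k) \<le> L"
  proof -
    fix k
    have "c k = c (k mod n)" using icirc_mod[OF ic] by simp
    moreover have "k mod n \<in> {0..<n}" using n3 by simp
    ultimately have "dd (c 0) (c k) \<in> S" unfolding S_def by (metis image_eqI)
    then show "dd (c 0) (c k) \<le> L" unfolding L_def using fin by simp
  qed
  have "L \<in> S" unfolding L_def using fin ne by simp
  then obtain q where q: "dd (c 0) (c q) = L" unfolding S_def by auto
  have L3: "3 \<le> L" using z maxl[of z] by simp
  have "L = 3" using top_any[OF ic sm h5 maxl q L3] by blast
  then have zL: "dd (c 0) (c z) = L" using z maxl[of z] by simp
  show ?thesis using top_any[OF ic sm h5 maxl zL L3] by blast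
qed


lemma dvd_small: "6 \<le> (n::int) \<Longrightarrow> n dvd k \<Longrightarrow> 7 \<le> k \<Longrightarrow> k \<le> 9 \<Longrightarrow> n = k"
proof -
  assume a: "6 \<le> n" "n dvd k" "7 \<le> k" "k \<le> 9"
  then have "n \<le> k" using zdvd_imp_le by simp
  then have "n = 6 \<or> n = 7 \<or> n = 8 \<or> n = 9" "k = 7 \<or> k = 8 \<or> k = 9" using a by auto
  then show "n = k" using a(2) by (elim disjE) simp_all
qed

lemma no_bad:
  assumes ic: "icirc c n" and sm: "small n" and h5: "\<forall>u m. isometric_circuit E u m \<longrightarrow> m \<le> 5"
    and bad: "3 \<le> dd (c p) (c z)"
  shows False
proof -
  define c1 where "c1 = (\<lambda>k. c (p + k))"
  have ic1: "icirc c1 n" unfolding c1_def using icirc_rot[OF ic] .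
  have "3 \<le> dd (c1 0) (c1 (z - p))" unfolding c1_def using bad by simp
  from ml0[OF ic1 sm h5 this] obtain s where s: "s = 1 \<or> s = -1" and
    r: "E (c1 s) (c1 (5*s))" "dd (c1 0) (c1 (2*s)) = 2" "dd (c1 0) (c1 (3*s)) = 3"
       "dd (c1 0) (c1 (4*s)) = 3" "dd (c1 0) (c1 (5*s)) = 2" by blast
  define e where "e = (\<lambda>k. c1 (0 + s * k))"
  have ice: "icirc e n" unfolding e_def using icirc_orient[OF ic1 s] .
  have tr: "\<And>j. e j = c1 (j * s)" unfolding e_def by (simp add: mult.commute)
  have r': "E (e 1) (e 5)" "dd (e 0) (e 2) = 2" "dd (e 0) (e 3) = 3" "dd (e 0) (e 4) = 3" "dd (e 0) (e 5) = 2"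
    using r tr by simp_all
  have V: "\<And>i. e i \<in> V" using icirc_V[OF ice] by auto
  have Ee: "\<And>i. E (e i) (e (i + 1))" using icirc_E[OF ice] by blast
  have n3: "3 \<le> n" using icirc_n[OF ice] .
  have eqd: "\<And>i j. e i = e j \<longleftrightarrow> n dvd (i - j)" using icirc_eq_dvd[OF ice] by blast
  have n6: "6 \<le> n"
  proof (rule ccontr)
    assume "\<not> 6 \<le> n"
    then have "n = 3 \<or> n = 4 \<or> n = 5" using n3 by auto
    then show False
    proof (elim disjE)
      assume "n = 3" then have "e 3 = e 0" using eqd by simp
      then show False using r' by simp
    next
      assume "n = 4" then have "e 4 = e 0" using eqd by simp
      then show False using r' by simp
    next
      assume "n = 5" then have "e 5 = e 0" using eqd by simp
      then show False using r' by simp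
    qed
  qed
  have E01: "E (e 0) (e 1)" using Ee[of 0] by simp
  have E12: "E (e 1) (e 2)" using Ee[of 1] by simp
  have E23: "E (e 2) (e 3)" using Ee[of 2] by simp
  have E54: "E (e 5) (e 4)" using icirc_E2[OF ice, of 4] by simp
  have Em0: "E (e (-1)) (e 0)" using Ee[of "-1"] by simp
  have n11: "e 1 \<noteq> e (-1)" using eqd n6 by (auto dest: zdvd_imp_le)
  have dm: "dd (e 0) (e (-1)) = 1" using d_adj[OF E_sym[OF Em0]] .
  have far: "\<And>x w. geod [e 0, e 1, x, w] (e 0) w \<Longrightarrow> w \<in> V \<Longrightarrow> 3 \<le> dd (e (-1)) w"
  proof (rule ccontr)
    fix x w assume g: "geod [e 0, e 1, x, w] (e 0) w" and wV: "w \<in> V" and nf: "\<not> 3 \<le> dd (e (-1)) w"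
    have l3: "dd (e 0) w = 3" using g unfolding geod_def by simp
    have "dd (e 0) w \<le> dd (e 0) (e (-1)) + dd (e (-1)) w" using d_tri[OF V V wV] .
    then have "dd (e 0) (e (-1)) + dd (e (-1)) w = dd (e 0) w" using l3 dm nf by simp
    then have "[e 0, e 1, x, w] ! dd (e 0) (e (-1)) = e (-1)" using anc[OF V V wV _ g] by simp
    then show False using dm n11 by simp
  qed
  have g3: "geod [e 0, e 1, e 2, e 3] (e 0) (e 3)" using walk3_geod[OF E01 E12 E23] r' by simp
  have g4: "geod [e 0, e 1, e 5, e 4] (e 0) (e 4)" using walk3_geod[OF E01 r'(1) E54] r' by simp
  have f3: "3 \<le> dd (e (-1)) (e 3)" using far[OF g3 V] .
  have f4: "3 \<le> dd (e (-1)) (e 4)" using far[OF g4 V] .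
  define e' where "e' = (\<lambda>k. e (-1 + k))"
  have ice': "icirc e' n" unfolding e'_def using icirc_rot[OF ice] .
  have f3': "3 \<le> dd (e' 0) (e' 4)" unfolding e'_def using f3 by simp
  have f4': "3 \<le> dd (e' 0) (e' 5)" unfolding e'_def using f4 by simp
  have not1: "\<And>s. E (e' s) (e' (5 * s)) \<Longrightarrow> s = 1 \<Longrightarrow> False"
  proof -
    fix s assume "E (e' s) (e' (5 * s))" "s = 1"
    then have "E (e 0) (e 4)" unfolding e'_def by simp
    then show False using d_adj r' by simp
  qed
  from ml0[OF ice' sm h5 f3'] obtain s1 where s1: "s1 = 1 \<or> s1 = -1" "E (e' s1) (e' (5 * s1))"
    "e' 4 = e' (3 * s1) \<or> e' 4 = e' (4 * s1)" by blast
  have s1m: "s1 = -1" using s1 not1 by blast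
  have A: "n dvd 7 \<or> n dvd 8"
  proof -
    have "e 3 = e (-4) \<or> e 3 = e (-5)" using s1(3) s1m unfolding e'_def by simp
    then show ?thesis using eqd by auto
  qed
  from ml0[OF ice' sm h5 f4'] obtain s2 where s2: "s2 = 1 \<or> s2 = -1" "E (e' s2) (e' (5 * s2))"
    "e' 5 = e' (3 * s2) \<or> e' 5 = e' (4 * s2)" by blast
  have s2m: "s2 = -1" using s2 not1 by blast
  have B: "n dvd 8 \<or> n dvd 9"
  proof -
    have "e 4 = e (-4) \<or> e 4 = e (-5)" using s2(3) s2m unfolding e'_def by simp
    then show ?thesis using eqd by auto
  qed
  have Eneg: "E (e (-2)) (e (-6))" using s2(2) s2m unfolding e'_def by simp
  have n8: "n = 8"
  proof -
    have "n = 7 \<or> n = 8" using A dvd_small[OF n6, of 7] dvd_small[OF n6, of 8] by fastforce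
    moreover have "n = 8 \<or> n = 9" using B dvd_small[OF n6, of 8] dvd_small[OF n6, of 9] by fastforce
    ultimately show ?thesis by auto
  qed
  have e_6: "e (-2) = e 6" "e (-6) = e 2" "e (-1) = e 7" "e 8 = e 0" using eqd n8 by simp_all
  have E26: "E (e 2) (e 6)" using Eneg e_6 E_sym by simp
  have E56: "E (e 5) (e 6)" using Ee[of 5] by simp
  have E67: "E (e 6) (e 7)" using Ee[of 6] by simp
  have E70: "E (e 7) (e 0)" using Ee[of 7] e_6 by simp
  have ne16: "e 1 \<noteq> e 6" "e 2 \<noteq> e 5" "e 1 \<noteq> e 7" "e 0 \<noteq> e 6" using eqd n8 by simp_all
  show False
  proof (cases "E (e 1) (e 6)")
    case True
    show False
    proof (cases "E (e 0) (e 6)")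
      case True
      have "e 6 = e 1" using walk2_uniq[OF True E_sym[OF E56] E01 r'(1) r'(5)] .
      then show False using ne16 by simp
    next
      case False
      have "dd (e 0) (e 6) = 2" using d_two[OF E_sym[OF E70] E_sym[OF E67] ne16(4) False] .
      then have "e 1 = e 7" using walk2_uniq[OF E01 \<open>E (e 1) (e 6)\<close> E_sym[OF E70] E_sym[OF E67]] by simp
      then show False using ne16 by simp
    qed
  next
    case False
    have "dd (e 1) (e 6) = 2" using d_two[OF E12 E26 ne16(1) False] .
    then have "e 2 = e 5" using walk2_uniq[OF E12 E26 r'(1) E56] by simp
    then show False using ne16 by simp
  qed
qed


lemma list_main:
  assumes h5: "\<forall>u m. isometric_circuit E u m \<longrightarrow> m \<le> 5"
  shows "lcirc xs \<Longrightarrow> a \<in> set xs \<Longrightarrow> b \<in> set xs \<Longrightarrow> dd a b \<le> 2"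
proof (induction "length xs" arbitrary: xs a b rule: less_induct)
  case less
  have sm: "small (int (length xs))" unfolding small_def using less.hyps by auto
  define N where "N = length xs"
  have lc: "3 \<le> N" "distinct xs" "walk E (xs @ [hd xs])" using less.prems unfolding lcirc_def N_def by auto
  have xne: "xs \<noteq> []" using lc unfolding N_def by auto
  define c where "c = (\<lambda>k::int. xs ! nat (k mod int N))"
  have cnat: "\<And>j. j < N \<Longrightarrow> c (int j) = xs ! j" unfolding c_def by simp
  have ic: "icirc c (int N)"
    unfolding icirc_def
  proof (intro conjI allI)
    show "3 \<le> int N" using lc by simp
  next
    fix i
    define j where "j = nat (i mod int N)"
    have m: "0 \<le> i mod int N" "i mod int N < int N" using lc by simp_all
    have j: "j < N" "int j = i mod int N" unfolding j_def using m by (simp_all add: nat_less_iff)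
    have "(i + 1) mod int N = (int j + 1) mod int N" using j by (simp add: mod_add_left_eq)
    also have "\<dots> = int ((j + 1) mod N)" by (simp add: zmod_int add.commute)
    finally have j1: "nat ((i + 1) mod int N) = (j + 1) mod N" by simp
    have ci: "c i = xs ! j" unfolding c_def j_def by simp
    have ci1: "c (i + 1) = xs ! ((j + 1) mod N)" unfolding c_def using j1 by simp
    have w: "E ((xs @ [hd xs]) ! j) ((xs @ [hd xs]) ! Suc j)" using walk_nth[OF lc(3), of j] j(1) N_def by simp
    show "E (c i) (c (i + 1))"
    proof (cases "j + 1 < N")
      case True
      then show ?thesis using w ci ci1 j(1) N_def by (simp add: nth_append)
    next
      case False
      then have "j + 1 = N" using j by simp
      then show ?thesis using w ci ci1 j(1) N_def xne by (simp add: nth_append hd_conv_nth)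
    qed
  next
    fix i j
    have m: "0 \<le> i mod int N" "i mod int N < int N" "0 \<le> j mod int N" "j mod int N < int N" using lc by simp_all
    have a: "nat (i mod int N) < N" "nat (j mod int N) < N" using m by (simp_all add: nat_less_iff)
    have "c i = c j \<longleftrightarrow> nat (i mod int N) = nat (j mod int N)"
      unfolding c_def using nth_eq_iff_index_eq[OF lc(2)] a N_def by simp
    also have "\<dots> \<longleftrightarrow> i mod int N = j mod int N" using m(1,3) by (simp add: eq_nat_nat_iff)
    finally show "c i = c j \<longleftrightarrow> i mod int N = j mod int N" .
  qed
  obtain ia where ia: "ia < N" "a = xs ! ia" using less.prems(2) unfolding N_def by (metis in_set_conv_nth)
  obtain ib where ib: "ib < N" "b = xs ! ib" using less.prems(3) unfolding N_def by (metis in_set_conv_nth)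
  show ?case
  proof (rule ccontr)
    assume "\<not> dd a b \<le> 2"
    then have "3 \<le> dd (c (int ia)) (c (int ib))" using ia ib cnat by simp
    then show False using no_bad[OF ic _ h5] sm N_def by simp
  qed
qed

end

theorem theorem2:
  fixes V :: "'a set" and E :: "'a \<Rightarrow> 'a \<Rightarrow> bool"
  assumes "simple_graph V E"
    and "locally_finite V E"
    and "geodetic V E"
    and "\<forall>u n. isometric_circuit E u n \<longrightarrow> n \<le> 5"
  shows "\<forall>u n. embedded_circuit E u n \<longrightarrow> circuit_diameter E u n \<le> 2"
proof (intro allI impI)
  interpret geo V E using assms(1,3) by unfold_locales
  fix u n assume emb: "embedded_circuit E u n"
  have eE: "\<And>i. i < n \<Longrightarrow> E (u i) (u (Suc i))" and einj: "inj_on u {..<n}" and en: "u n = u 0"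
    using emb unfolding embedded_circuit_def by auto
  have key: "gdist E (u i) (u j) \<le> 2" if ij: "i \<le> n" "j \<le> n" for i j
  proof (cases "n \<le> 2")
    case True
    then have "n = 0 \<or> n = 1 \<or> n = 2" by auto
    then show ?thesis
    proof (elim disjE)
      assume "n = 0" then show ?thesis using ij by simp
    next
      assume n1: "n = 1"
      then have "E (u 0) (u 1)" using eE[of 0] by simp
      then show ?thesis using en n1 E_irr by simp
    next
      assume n2: "n = 2"
      have e01: "E (u 0) (u 1)" using eE[of 0] n2 by simp
      have u2: "u 2 = u 0" using en n2 by simp
      have "u i \<in> {u 0, u 1}" "u j \<in> {u 0, u 1}" using ij n2 u2 by (auto simp: le_Suc_eq numeral_2_eq_2)
      then show ?thesis using d_adj_le[OF e01] d_adj_le[OF E_sym[OF e01]] by auto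
    qed
  next
    case False
    define xs where "xs = map u [0..<n]"
    have lc: "lcirc xs" unfolding lcirc_def
    proof (intro conjI)
      show "3 \<le> length xs" unfolding xs_def using False by simp
      show "distinct xs" unfolding xs_def using einj by (simp add: distinct_map lessThan_atLeast0)
      have hx: "hd xs = u 0" unfolding xs_def using False by (simp add: hd_map)
      have eq: "xs @ [hd xs] = map u [0..<Suc n]" unfolding hx unfolding xs_def using en by simp
      have w: "walk E (map u [0..<Suc n])" unfolding walk_def using eE by (auto simp del: upt_Suc)
      show "walk E (xs @ [hd xs])" unfolding eq by (rule w)
    qed
    have mem: "u k \<in> set xs" if "k \<le> n" for k
    proof (cases "k < n")
      case True then show ?thesis unfolding xs_def by simp
    next
      case False then have "k = n" using that by simp
      then show ?thesis unfolding xs_def using en \<open>\<not> n \<le> 2\<close> by simp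
    qed
    show ?thesis using list_main[OF assms(4) lc mem[OF ij(1)] mem[OF ij(2)]] .
  qed
  have fin: "finite {gdist E (u i) (u j) | i j. i \<le> n \<and> j \<le> n}"
  proof -
    have "{gdist E (u i) (u j) | i j. i \<le> n \<and> j \<le> n} = (\<lambda>(i, j). gdist E (u i) (u j)) ` ({..n} \<times> {..n})"
      by auto
    then show ?thesis by simp
  qed
  have ne: "{gdist E (u i) (u j) | i j. i \<le> n \<and> j \<le> n} \<noteq> {}" by blast
  show "circuit_diameter E u n \<le> 2"
    unfolding circuit_diameter_def using Max_le_iff[OF fin ne] key by blast
qed



end
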